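(* Let $Q(t)=(1+t)^{-\lambda}\theta(t)^{n\gamma-n+2}-(1+t)$ for $t\ge0$. Then $|Q(t)|\le C\ln(1+t)$ if $\lambda=0$ and $|Q(t)|\le C(1+t)^{\lambda}$ if $0<\lambda<1$; moreover for every integer $h\ge1$, $\big|\frac{d^hQ}{dt^h}(t)\big|\le C(h)(1+t)^{\lambda-h}$ for all $t\ge0$, where the constants depend only on $n,\gamma,\lambda$ (and $h$).
   Context: Fix $n\in\{2,3\}$, $\gamma>1$, $\lambda\in[0,1)$, $\kappa=\frac{1+\lambda}{n\gamma-n+2}$, $\nu(t)=(1+t)^\kappa$. Let $h$ solve $h_{tt}+(1+t)^{-\lambda}h_t-\kappa(\nu+h)^{n-n\gamma-1}=-\nu_{tt}-(1+t)^{-\lambda}\nu_t$ for $t>0$, $h(0)=h_t(0)=0$, and set $\theta=\nu+h$. *)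

theory Defs
  imports "HOL-Analysis.Analysis"
begin

definition kappa :: "nat \<Rightarrow> real \<Rightarrow> real \<Rightarrow> real" where
  "kappa n gam lam = (1 + lam) / (real n * gam - real n + 2)"

definition nu :: "nat \<Rightarrow> real \<Rightarrow> real \<Rightarrow> real \<Rightarrow> real" where
  "nu n gam lam t = (1 + t) powr kappa n gam lam"

end

theory Submission
  imports Defs
begin
definition Ck :: "nat \<Rightarrow> (real \<Rightarrow> real) \<Rightarrow> bool" where
  "Ck k f \<longleftrightarrow> (\<forall>j\<le>k. \<forall>t>0. ((deriv ^^ j) f has_real_derivative (deriv ^^ Suc j) f t) (at t))"

definition smth :: "(real \<Rightarrow> real) \<Rightarrow> bool" where
  "smth f \<longleftrightarrow> (\<forall>k. Ck k f)"

lemma funpow_deriv_Suc: "(deriv ^^ Suc j) f = (deriv ^^ j) (deriv f)"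
  by (simp add: funpow_Suc_right del: funpow.simps)

lemma open_pos: "open {t::real. t > 0}"
  using open_greaterThan[of "0::real"] by (simp add: greaterThan_def)

lemma deriv_cong_pos:
  fixes f g :: "real \<Rightarrow> real" and t :: real
  assumes "\<And>t. t > 0 \<Longrightarrow> f t = g t" "t > 0"
  shows "deriv f t = deriv g t"
proof (rule deriv_cong_ev[OF _ refl])
  have "eventually (\<lambda>s. s \<in> {s::real. s > 0}) (nhds t)"
    using open_pos assms(2) by (intro eventually_nhds_in_open) auto
  then show "eventually (\<lambda>s. f s = g s) (nhds t)"
    by eventually_elim (use assms(1) in auto)
qed

lemma funpow_deriv_cong_pos:
  fixes f g :: "real \<Rightarrow> real" and t :: real
  assumes "\<And>t. t > 0 \<Longrightarrow> f t = g t"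
  shows "t > 0 \<Longrightarrow> (deriv ^^ j) f t = (deriv ^^ j) g t"
proof (induction j arbitrary: t)
  case 0 then show ?case using assms by simp
next
  case (Suc j)
  have "(deriv ^^ Suc j) f t = deriv ((deriv ^^ j) f) t" by simp
  also have "\<dots> = deriv ((deriv ^^ j) g) t"
    by (rule deriv_cong_pos[OF Suc.IH Suc.prems])
  finally show ?case by simp
qed

lemma DERIV_cong_pos:
  fixes f g :: "real \<Rightarrow> real" and t :: real
  assumes "\<And>t. t > 0 \<Longrightarrow> f t = g t" "t > 0" "(f has_real_derivative D) (at t)"
  shows "(g has_real_derivative D) (at t)"
  using has_field_derivative_transform_within_open[OF assms(3) open_pos, of g] assms by auto

lemma Ck_cong:
  fixes f g :: "real \<Rightarrow> real"
  assumes "\<And>t. t > 0 \<Longrightarrow> f t = g t" "Ck k f"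
  shows "Ck k g"
  unfolding Ck_def
proof (intro allI impI)
  fix j t assume j: "j \<le> k" and t: "(t::real) > 0"
  have "((deriv ^^ j) f has_real_derivative (deriv ^^ Suc j) f t) (at t)"
    using assms(2) j t unfolding Ck_def by auto
  then have "((deriv ^^ j) g has_real_derivative (deriv ^^ Suc j) f t) (at t)"
    by (rule DERIV_cong_pos[rotated 2]) (use funpow_deriv_cong_pos[OF assms(1)] t in auto)
  then show "((deriv ^^ j) g has_real_derivative (deriv ^^ Suc j) g t) (at t)"
    using funpow_deriv_cong_pos[OF assms(1) t, where j="Suc j"] by simp
qed

lemma smth_cong:
  fixes f g :: "real \<Rightarrow> real"
  assumes "\<And>t. t > 0 \<Longrightarrow> f t = g t" "smth f"
  shows "smth g"
  using Ck_cong[of f g] assms unfolding smth_def by blast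

lemma Ck_0: "Ck 0 f \<longleftrightarrow> (\<forall>t>0. (f has_real_derivative deriv f t) (at t))"
  unfolding Ck_def by simp

lemma Ck_Suc: "Ck (Suc k) f \<longleftrightarrow> (\<forall>t>0. (f has_real_derivative deriv f t) (at t)) \<and> Ck k (deriv f)"
proof
  assume A: "Ck (Suc k) f"
  show "(\<forall>t>0. (f has_real_derivative deriv f t) (at t)) \<and> Ck k (deriv f)"
  proof
    show "\<forall>t>0. (f has_real_derivative deriv f t) (at t)"
      using A unfolding Ck_def by (metis funpow_0 funpow_deriv_Suc le0)
    show "Ck k (deriv f)" unfolding Ck_def
    proof (intro allI impI)
      fix j t assume "j \<le> k" "(t::real) > 0"
      then have "((deriv ^^ Suc j) f has_real_derivative (deriv ^^ Suc (Suc j)) f t) (at t)"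
        using A unfolding Ck_def by auto
      then show "((deriv ^^ j) (deriv f) has_real_derivative (deriv ^^ Suc j) (deriv f) t) (at t)"
        by (simp only: funpow_deriv_Suc)
    qed
  qed
next
  assume A: "(\<forall>t>0. (f has_real_derivative deriv f t) (at t)) \<and> Ck k (deriv f)"
  show "Ck (Suc k) f" unfolding Ck_def
  proof (intro allI impI)
    fix j t assume j: "j \<le> Suc k" and t: "(t::real) > 0"
    show "((deriv ^^ j) f has_real_derivative (deriv ^^ Suc j) f t) (at t)"
    proof (cases j)
      case 0 then show ?thesis using A t by simp
    next
      case (Suc i)
      then have "((deriv ^^ i) (deriv f) has_real_derivative (deriv ^^ Suc i) (deriv f) t) (at t)"
        using A j t unfolding Ck_def by auto
      then show ?thesis using Suc by (simp only: funpow_deriv_Suc)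
    qed
  qed
qed

lemma Ck_mono: "Ck k f \<Longrightarrow> j \<le> k \<Longrightarrow> Ck j f"
  unfolding Ck_def by auto

lemma Ck_diff: "Ck k f \<Longrightarrow> t > 0 \<Longrightarrow> (f has_real_derivative deriv f t) (at t)"
  using Ck_mono[of k f 0] by (simp add: Ck_0)

lemma smth_deriv: "smth f \<Longrightarrow> smth (deriv f)"
  unfolding smth_def using Ck_Suc by blast

lemma smth_diff: "smth f \<Longrightarrow> t > 0 \<Longrightarrow> (f has_real_derivative deriv f t) (at t)"
  unfolding smth_def using Ck_diff by blast

lemma Ck_add: "Ck k f \<Longrightarrow> Ck k g \<Longrightarrow> Ck k (\<lambda>t. f t + g t)"
proof (induction k arbitrary: f g)
  case 0
  then show ?case unfolding Ck_0
    by (auto intro!: derivative_eq_intros DERIV_imp_deriv[symmetric])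
next
  case (Suc k)
  have d: "\<And>t. t > 0 \<Longrightarrow> ((\<lambda>t. f t + g t) has_real_derivative deriv f t + deriv g t) (at t)"
    using Suc.prems by (auto simp: Ck_Suc intro!: derivative_eq_intros)
  have "Ck k (\<lambda>t. deriv f t + deriv g t)" using Suc by (simp add: Ck_Suc)
  then have "Ck k (deriv (\<lambda>t. f t + g t))"
    by (rule Ck_cong[rotated]) (simp add: DERIV_imp_deriv[OF d])
  then show ?case using d by (auto simp: Ck_Suc DERIV_imp_deriv[OF d])
qed

lemma Ck_cmult: "Ck k f \<Longrightarrow> Ck k (\<lambda>t. c * f t)"
proof (induction k arbitrary: f)
  case 0
  then show ?case unfolding Ck_0
    by (auto intro!: derivative_eq_intros DERIV_imp_deriv[symmetric])
next
  case (Suc k)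
  have d: "\<And>t. t > 0 \<Longrightarrow> ((\<lambda>t. c * f t) has_real_derivative c * deriv f t) (at t)"
    using Suc.prems by (auto simp: Ck_Suc intro!: derivative_eq_intros)
  have "Ck k (\<lambda>t. c * deriv f t)" using Suc by (simp add: Ck_Suc)
  then have "Ck k (deriv (\<lambda>t. c * f t))"
    by (rule Ck_cong[rotated]) (simp add: DERIV_imp_deriv[OF d])
  then show ?case using d by (auto simp: Ck_Suc DERIV_imp_deriv[OF d])
qed

lemma Ck_const: "Ck k (\<lambda>t. c)"
proof (induction k arbitrary: c)
  case 0 then show ?case by (simp add: Ck_0)
next
  case (Suc k)
  have "deriv (\<lambda>t. c) = (\<lambda>t. 0)" by (rule ext) simp
  then show ?case using Suc by (simp add: Ck_Suc)
qed

lemma Ck_mult: "Ck k f \<Longrightarrow> Ck k g \<Longrightarrow> Ck k (\<lambda>t. f t * g t)"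
proof (induction k arbitrary: f g)
  case 0
  then show ?case unfolding Ck_0
    by (auto intro!: derivative_eq_intros DERIV_imp_deriv[symmetric])
next
  case (Suc k)
  have d: "\<And>t. t > 0 \<Longrightarrow> ((\<lambda>t. f t * g t) has_real_derivative deriv f t * g t + f t * deriv g t) (at t)"
    using Suc.prems by (auto simp: Ck_Suc intro!: derivative_eq_intros)
  have "Ck k (\<lambda>t. deriv f t * g t + f t * deriv g t)"
    using Suc Ck_mono[of "Suc k" _ k] by (intro Ck_add) (auto simp: Ck_Suc)
  then have "Ck k (deriv (\<lambda>t. f t * g t))"
    by (rule Ck_cong[rotated]) (simp add: DERIV_imp_deriv[OF d])
  then show ?case using d by (auto simp: Ck_Suc DERIV_imp_deriv[OF d])
qed

lemma Ck_powr:
  assumes "Ck k f" "\<And>t. t > 0 \<Longrightarrow> f t > 0"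
  shows "Ck k (\<lambda>t. f t powr r)"
  using assms(1)
proof (induction k arbitrary: r)
  case 0
  show ?case unfolding Ck_0
  proof (intro allI impI)
    fix t :: real assume t: "t > 0"
    have "(f has_real_derivative deriv f t) (at t)" using 0 t by (auto simp: Ck_0)
    from DERIV_fun_powr[OF this assms(2)[OF t], of r]
    have "((\<lambda>t. f t powr r) has_real_derivative r * f t powr (r - 1) * deriv f t) (at t)" by simp
    then show "((\<lambda>t. f t powr r) has_real_derivative deriv (\<lambda>t. f t powr r) t) (at t)"
      by (simp add: DERIV_imp_deriv)
  qed
next
  case (Suc k)
  have d: "\<And>t. t > 0 \<Longrightarrow> ((\<lambda>t. f t powr r) has_real_derivative r * f t powr (r - 1) * deriv f t) (at t)"
  proof -
    fix t :: real assume t: "t > 0"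
    have "(f has_real_derivative deriv f t) (at t)" using Suc.prems t by (auto simp: Ck_Suc)
    from DERIV_fun_powr[OF this assms(2)[OF t], of r] show "?thesis t" by simp
  qed
  have "Ck k (\<lambda>t. r * f t powr (r - 1) * deriv f t)"
    using Suc Ck_mono[of "Suc k" _ k] unfolding mult.assoc
    by (intro Ck_cmult Ck_mult) (auto simp: Ck_Suc)
  then have "Ck k (deriv (\<lambda>t. f t powr r))"
    by (rule Ck_cong[rotated]) (simp add: DERIV_imp_deriv[OF d])
  then show ?case using d by (auto simp: Ck_Suc DERIV_imp_deriv[OF d])
qed

lemma smth_add: "smth f \<Longrightarrow> smth g \<Longrightarrow> smth (\<lambda>t. f t + g t)"
  unfolding smth_def using Ck_add by blast
lemma smth_cmult: "smth f \<Longrightarrow> smth (\<lambda>t. c * f t)"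
  unfolding smth_def using Ck_cmult by blast
lemma smth_mult: "smth f \<Longrightarrow> smth g \<Longrightarrow> smth (\<lambda>t. f t * g t)"
  unfolding smth_def using Ck_mult by blast
lemma smth_const: "smth (\<lambda>t. c)"
  unfolding smth_def using Ck_const by blast
lemma smth_powr: "smth f \<Longrightarrow> (\<And>t. t > 0 \<Longrightarrow> f t > 0) \<Longrightarrow> smth (\<lambda>t. f t powr r)"
  unfolding smth_def using Ck_powr by blast
lemma smth_diff': "smth f \<Longrightarrow> smth g \<Longrightarrow> smth (\<lambda>t. f t - g t)"
  using smth_add[of f "\<lambda>t. (-1) * g t"] smth_cmult[of g "-1"] by simp

lemma smth_lin: "smth (\<lambda>t. 1 + t)"
proof -
  have "Ck k (\<lambda>t. 1 + t)" for k
  proof (cases k)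
    case 0 then show ?thesis by (auto simp: Ck_0 intro!: derivative_eq_intros DERIV_imp_deriv[symmetric])
  next
    case (Suc k')
    have "deriv (\<lambda>t::real. 1 + t) = (\<lambda>t. 1)"
      by (rule ext, rule DERIV_imp_deriv) (auto intro!: derivative_eq_intros)
    then show ?thesis using Suc Ck_const
      by (auto simp: Ck_Suc intro!: derivative_eq_intros)
  qed
  then show ?thesis unfolding smth_def by blast
qed

lemma smth_pw: "smth (\<lambda>t. (1 + t) powr s)"
  using smth_powr[OF smth_lin, of s] by simp

lemma deriv_add_pos: "smth f \<Longrightarrow> smth g \<Longrightarrow> t > 0 \<Longrightarrow> deriv (\<lambda>t. f t + g t) t = deriv f t + deriv g t"
  by (rule DERIV_imp_deriv) (auto intro!: derivative_eq_intros smth_diff)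
lemma deriv_cmult_pos: "smth f \<Longrightarrow> t > 0 \<Longrightarrow> deriv (\<lambda>t. c * f t) t = c * deriv f t"
  by (rule DERIV_imp_deriv) (auto intro!: derivative_eq_intros smth_diff)
lemma deriv_mult_pos: "smth f \<Longrightarrow> smth g \<Longrightarrow> t > 0 \<Longrightarrow> deriv (\<lambda>t. f t * g t) t = deriv f t * g t + f t * deriv g t"
  by (rule DERIV_imp_deriv) (auto intro!: derivative_eq_intros smth_diff)
lemma deriv_powr_pos: "smth f \<Longrightarrow> (\<And>t. t > 0 \<Longrightarrow> f t > 0) \<Longrightarrow> t > 0 \<Longrightarrow>
   deriv (\<lambda>t. f t powr r) t = r * f t powr (r - 1) * deriv f t"
  by (rule DERIV_imp_deriv) (use DERIV_fun_powr[OF smth_diff, of f t r] in auto)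

lemma fd_add: "smth f \<Longrightarrow> smth g \<Longrightarrow> t > 0 \<Longrightarrow> (deriv ^^ j) (\<lambda>t. f t + g t) t = (deriv ^^ j) f t + (deriv ^^ j) g t"
proof (induction j arbitrary: f g t)
  case 0 then show ?case by simp
next
  case (Suc j)
  have "(deriv ^^ Suc j) (\<lambda>t. f t + g t) t = (deriv ^^ j) (deriv (\<lambda>t. f t + g t)) t"
    by (simp only: funpow_deriv_Suc)
  also have "\<dots> = (deriv ^^ j) (\<lambda>t. deriv f t + deriv g t) t"
    by (rule funpow_deriv_cong_pos[OF _ Suc.prems(3)]) (simp add: deriv_add_pos Suc.prems)
  also have "\<dots> = (deriv ^^ j) (deriv f) t + (deriv ^^ j) (deriv g) t"
    using Suc by (simp add: smth_deriv)
  finally show ?case by (simp only: funpow_deriv_Suc)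
qed

lemma fd_cmult: "smth f \<Longrightarrow> t > 0 \<Longrightarrow> (deriv ^^ j) (\<lambda>t. c * f t) t = c * (deriv ^^ j) f t"
proof (induction j arbitrary: f t)
  case 0 then show ?case by simp
next
  case (Suc j)
  have "(deriv ^^ Suc j) (\<lambda>t. c * f t) t = (deriv ^^ j) (deriv (\<lambda>t. c * f t)) t"
    by (simp only: funpow_deriv_Suc)
  also have "\<dots> = (deriv ^^ j) (\<lambda>t. c * deriv f t) t"
    by (rule funpow_deriv_cong_pos[OF _ Suc.prems(2)]) (simp add: deriv_cmult_pos Suc.prems)
  also have "\<dots> = c * (deriv ^^ j) (deriv f) t"
    using Suc by (simp add: smth_deriv)
  finally show ?case by (simp only: funpow_deriv_Suc)
qed

lemma fd_mult: "smth f \<Longrightarrow> smth g \<Longrightarrow> t > 0 \<Longrightarrow>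
  (deriv ^^ Suc j) (\<lambda>t. f t * g t) t = (deriv ^^ j) (\<lambda>t. deriv f t * g t) t + (deriv ^^ j) (\<lambda>t. f t * deriv g t) t"
proof -
  assume f: "smth f" and g: "smth g" and t: "t > 0"
  have "(deriv ^^ Suc j) (\<lambda>t. f t * g t) t = (deriv ^^ j) (deriv (\<lambda>t. f t * g t)) t"
    by (simp only: funpow_deriv_Suc)
  also have "\<dots> = (deriv ^^ j) (\<lambda>t. deriv f t * g t + f t * deriv g t) t"
    by (rule funpow_deriv_cong_pos[OF _ t]) (simp add: deriv_mult_pos f g)
  also have "\<dots> = (deriv ^^ j) (\<lambda>t. deriv f t * g t) t + (deriv ^^ j) (\<lambda>t. f t * deriv g t) t"
    using f g t by (intro fd_add smth_mult smth_deriv)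
  finally show ?thesis .
qed

definition Bd :: "nat \<Rightarrow> real \<Rightarrow> (real \<Rightarrow> real) \<Rightarrow> bool" where
  "Bd k m f \<longleftrightarrow> (\<forall>j\<le>k. \<exists>C. \<forall>t>0. \<bar>(deriv ^^ j) f t\<bar> \<le> C * (1 + t) powr (m - real j))"

definition Sy :: "real \<Rightarrow> (real \<Rightarrow> real) \<Rightarrow> bool" where
  "Sy m f \<longleftrightarrow> (\<forall>k. Bd k m f)"

lemma Bd_0: "Bd 0 m f \<longleftrightarrow> (\<exists>C. \<forall>t>0. \<bar>f t\<bar> \<le> C * (1 + t) powr m)"
  unfolding Bd_def by simp

lemma Bd_Suc: "Bd (Suc k) m f \<longleftrightarrow> Bd 0 m f \<and> Bd k (m - 1) (deriv f)"
proof
  assume A: "Bd (Suc k) m f"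
  show "Bd 0 m f \<and> Bd k (m - 1) (deriv f)"
  proof
    show "Bd 0 m f"
    proof -
      from A have "\<exists>C. \<forall>t>0. \<bar>(deriv ^^ 0) f t\<bar> \<le> C * (1 + t) powr (m - real 0)" unfolding Bd_def by blast
      then show ?thesis by (simp add: Bd_0)
    qed
    show "Bd k (m - 1) (deriv f)" unfolding Bd_def
    proof (intro allI impI)
      fix j assume "j \<le> k"
      then obtain C where "\<forall>t>0. \<bar>(deriv ^^ Suc j) f t\<bar> \<le> C * (1 + t) powr (m - real (Suc j))"
        using A[unfolded Bd_def, rule_format, of "Suc j"] by auto
      then show "\<exists>C. \<forall>t>0. \<bar>(deriv ^^ j) (deriv f) t\<bar> \<le> C * (1 + t) powr (m - 1 - real j)"
        by (intro exI[of _ C]) (simp only: funpow_deriv_Suc, simp add: algebra_simps)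
    qed
  qed
next
  assume A: "Bd 0 m f \<and> Bd k (m - 1) (deriv f)"
  show "Bd (Suc k) m f" unfolding Bd_def
  proof (intro allI impI)
    fix j assume j: "j \<le> Suc k"
    show "\<exists>C. \<forall>t>0. \<bar>(deriv ^^ j) f t\<bar> \<le> C * (1 + t) powr (m - real j)"
    proof (cases j)
      case 0 then show ?thesis using A by (simp add: Bd_0)
    next
      case (Suc i)
      then obtain C where "\<forall>t>0. \<bar>(deriv ^^ i) (deriv f) t\<bar> \<le> C * (1 + t) powr (m - 1 - real i)"
        using A j unfolding Bd_def by auto
      then show ?thesis using Suc
        by (intro exI[of _ C]) (simp only: funpow_deriv_Suc, simp add: algebra_simps)
    qed
  qed
qed

lemma Bd_mono: "Bd k m f \<Longrightarrow> j \<le> k \<Longrightarrow> Bd j m f"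
  unfolding Bd_def by auto

lemma Bd_cong:
  fixes f g :: "real \<Rightarrow> real"
  assumes "\<And>t. t > 0 \<Longrightarrow> f t = g t" "Bd k m f"
  shows "Bd k m g"
  unfolding Bd_def
proof (intro allI impI)
  fix j assume "j \<le> k"
  then obtain C where C: "\<forall>t>0. \<bar>(deriv ^^ j) f t\<bar> \<le> C * (1 + t) powr (m - real j)"
    using assms(2)[unfolded Bd_def, rule_format, of j] by auto
  show "\<exists>C. \<forall>t>0. \<bar>(deriv ^^ j) g t\<bar> \<le> C * (1 + t) powr (m - real j)"
  proof (intro exI[of _ C] allI impI)
    fix t :: real assume t: "t > 0"
    show "\<bar>(deriv ^^ j) g t\<bar> \<le> C * (1 + t) powr (m - real j)"
      using C t funpow_deriv_cong_pos[of f g, OF assms(1) t, where j=j] by (metis (no_types))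
  qed
qed

lemma Sy_cong:
  fixes f g :: "real \<Rightarrow> real"
  assumes "\<And>t. t > 0 \<Longrightarrow> f t = g t" "Sy m f"
  shows "Sy m g"
  using assms Bd_cong[of f g, OF assms(1)] unfolding Sy_def by blast

lemma bound_C_nonneg:
  assumes "\<forall>t>0. \<bar>x t\<bar> \<le> C * (1 + (t::real)) powr e"
  shows "C \<ge> 0"
proof -
  have "\<bar>x 1\<bar> \<le> C * 2 powr e" using assms[rule_format, of 1] by simp
  then have "0 \<le> C * 2 powr e" by (meson abs_ge_zero order_trans)
  then show ?thesis by (simp add: zero_le_mult_iff)
qed

lemma Bd_mono_m:
  assumes "Bd k m f" "m \<le> m'"
  shows "Bd k m' f"
  unfolding Bd_def
proof (intro allI impI)
  fix j assume "j \<le> k"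
  then obtain C where C: "\<forall>t>0. \<bar>(deriv ^^ j) f t\<bar> \<le> C * (1 + t) powr (m - real j)"
    using assms unfolding Bd_def by auto
  have C0: "C \<ge> 0" by (rule bound_C_nonneg[OF C])
  show "\<exists>C. \<forall>t>0. \<bar>(deriv ^^ j) f t\<bar> \<le> C * (1 + t) powr (m' - real j)"
  proof (intro exI[of _ C] allI impI)
    fix t :: real assume t: "t > 0"
    have "(1 + t) powr (m - real j) \<le> (1 + t) powr (m' - real j)"
      using t assms(2) by (intro powr_mono) auto
    then show "\<bar>(deriv ^^ j) f t\<bar> \<le> C * (1 + t) powr (m' - real j)"
      using C t C0 by (meson mult_left_mono order_trans)
  qed
qed

lemma Bd_add:
  "smth f \<Longrightarrow> smth g \<Longrightarrow> Bd k m f \<Longrightarrow> Bd k m g \<Longrightarrow> Bd k m (\<lambda>t. f t + g t)"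
  unfolding Bd_def
proof (intro allI impI)
  fix j assume f: "smth f" and g: "smth g" and A: "\<forall>j\<le>k. \<exists>C. \<forall>t>0. \<bar>(deriv ^^ j) f t\<bar> \<le> C * (1 + t) powr (m - real j)"
    and B: "\<forall>j\<le>k. \<exists>C. \<forall>t>0. \<bar>(deriv ^^ j) g t\<bar> \<le> C * (1 + t) powr (m - real j)" and j: "j \<le> k"
  obtain C1 where C1: "\<forall>t>0. \<bar>(deriv ^^ j) f t\<bar> \<le> C1 * (1 + t) powr (m - real j)" using A j by auto
  obtain C2 where C2: "\<forall>t>0. \<bar>(deriv ^^ j) g t\<bar> \<le> C2 * (1 + t) powr (m - real j)" using B j by auto
  show "\<exists>C. \<forall>t>0. \<bar>(deriv ^^ j) (\<lambda>t. f t + g t) t\<bar> \<le> C * (1 + t) powr (m - real j)"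
  proof (intro exI[of _ "C1 + C2"] allI impI)
    fix t :: real assume t: "t > 0"
    show "\<bar>(deriv ^^ j) (\<lambda>t. f t + g t) t\<bar> \<le> (C1 + C2) * (1 + t) powr (m - real j)"
    proof -
      have "\<bar>(deriv ^^ j) f t\<bar> \<le> C1 * (1 + t) powr (m - real j)" "\<bar>(deriv ^^ j) g t\<bar> \<le> C2 * (1 + t) powr (m - real j)"
        using C1 C2 t by auto
      then show ?thesis using fd_add[OF f g t, of j] by (simp add: distrib_right)
    qed
  qed
qed

lemma Bd_cmult:
  "smth f \<Longrightarrow> Bd k m f \<Longrightarrow> Bd k m (\<lambda>t. c * f t)"
  unfolding Bd_def
proof (intro allI impI)
  fix j assume f: "smth f" and A: "\<forall>j\<le>k. \<exists>C. \<forall>t>0. \<bar>(deriv ^^ j) f t\<bar> \<le> C * (1 + t) powr (m - real j)"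
    and j: "j \<le> k"
  obtain C1 where C1: "\<forall>t>0. \<bar>(deriv ^^ j) f t\<bar> \<le> C1 * (1 + t) powr (m - real j)" using A j by auto
  show "\<exists>C. \<forall>t>0. \<bar>(deriv ^^ j) (\<lambda>t. c * f t) t\<bar> \<le> C * (1 + t) powr (m - real j)"
  proof (intro exI[of _ "\<bar>c\<bar> * C1"] allI impI)
    fix t :: real assume t: "t > 0"
    have "\<bar>c * (deriv ^^ j) f t\<bar> \<le> \<bar>c\<bar> * (C1 * (1 + t) powr (m - real j))"
      unfolding abs_mult using C1 t by (intro mult_left_mono) auto
    then show "\<bar>(deriv ^^ j) (\<lambda>t. c * f t) t\<bar> \<le> \<bar>c\<bar> * C1 * (1 + t) powr (m - real j)"
      using fd_cmult[OF f t, where c=c and j=j] by simp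
  qed
qed

lemma Bd_mult:
  "smth f \<Longrightarrow> smth g \<Longrightarrow> Bd k m f \<Longrightarrow> Bd k q g \<Longrightarrow> Bd k (m + q) (\<lambda>t. f t * g t)"
proof (induction k arbitrary: f g m q)
  case 0
  then obtain C1 C2 where C1: "\<forall>t>0. \<bar>f t\<bar> \<le> C1 * (1 + t) powr m" and C2: "\<forall>t>0. \<bar>g t\<bar> \<le> C2 * (1 + t) powr q"
    by (auto simp: Bd_0)
  have "C2 \<ge> 0" by (rule bound_C_nonneg[OF C2])
  show ?case unfolding Bd_0
  proof (intro exI[of _ "C1 * C2"] allI impI)
    fix t :: real assume t: "t > 0"
    have "\<bar>f t * g t\<bar> \<le> (C1 * (1 + t) powr m) * (C2 * (1 + t) powr q)"
      unfolding abs_mult using C1 C2 t by (intro mult_mono) auto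
    then show "\<bar>f t * g t\<bar> \<le> C1 * C2 * (1 + t) powr (m + q)"
      using t by (simp add: powr_add algebra_simps)
  qed
next
  case (Suc k)
  have f0: "Bd 0 m f" and g0: "Bd 0 q g" and fk: "Bd k (m - 1) (deriv f)" and gk: "Bd k (q - 1) (deriv g)"
    using Suc.prems(3,4) by (simp_all add: Bd_Suc)
  have fk': "Bd k m f" using Suc.prems(3) Bd_mono[of "Suc k" m f k] by simp
  have gk': "Bd k q g" using Suc.prems(4) Bd_mono[of "Suc k" q g k] by simp
  have B0: "Bd 0 (m + q) (\<lambda>t. f t * g t)"
    using Suc.IH[OF Suc.prems(1,2) fk' gk'] Bd_mono[of k _ _ 0] by simp
  have "Bd k (m - 1 + q) (\<lambda>t. deriv f t * g t)"
    using Suc.prems(1,2) fk gk' by (intro Suc.IH smth_deriv) auto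
  moreover have "Bd k (m + (q - 1)) (\<lambda>t. f t * deriv g t)"
    using Suc.prems(1,2) fk' gk by (intro Suc.IH smth_deriv) auto
  ultimately have "Bd k (m + q - 1) (\<lambda>t. deriv f t * g t + f t * deriv g t)"
    using Suc.prems by (intro Bd_add smth_mult smth_deriv) (auto simp: algebra_simps)
  then have "Bd k (m + q - 1) (deriv (\<lambda>t. f t * g t))"
    by (rule Bd_cong[rotated]) (simp add: deriv_mult_pos Suc.prems)
  then show ?case using B0 by (simp add: Bd_Suc)
qed

lemma fd_zero: "(deriv ^^ j) (\<lambda>t::real. 0::real) = (\<lambda>t. 0)"
proof (induction j)
  case 0 then show ?case by simp
next
  case (Suc j)
  have "deriv (\<lambda>t::real. 0::real) = (\<lambda>t. 0)" by (rule ext) simp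
  then show ?case using Suc by (simp only: funpow_deriv_Suc)
qed

lemma Bd_zero: "Bd k m (\<lambda>t. 0)"
  unfolding Bd_def fd_zero by (auto intro!: exI[of _ 0])

lemma Bd_const: "Bd k 0 (\<lambda>t. c)"
proof (cases k)
  case 0
  have "Bd 0 0 (\<lambda>t. c)" unfolding Bd_0 by (intro exI[of _ "\<bar>c\<bar>"]) auto
  then show ?thesis using 0 by simp
next
  case (Suc k')
  have "deriv (\<lambda>t. c) = (\<lambda>t. 0)" by (rule ext) simp
  moreover have "Bd 0 0 (\<lambda>t. c)" unfolding Bd_0 by (intro exI[of _ "\<bar>c\<bar>"]) auto
  ultimately show ?thesis using Suc Bd_zero by (simp add: Bd_Suc)
qed

lemma Bd_SucI:
  assumes "Bd k m f" "\<exists>C. \<forall>t>0. \<bar>(deriv ^^ Suc k) f t\<bar> \<le> C * (1 + t) powr (m - real (Suc k))"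
  shows "Bd (Suc k) m f"
  using assms unfolding Bd_def by (metis le_Suc_eq)

lemma d_pw: "t > -1 \<Longrightarrow> ((\<lambda>t. (1 + t) powr e) has_real_derivative e * (1 + t) powr (e - 1)) (at t)"
proof -
  assume t: "t > -1"
  have "((\<lambda>t. 1 + t) has_real_derivative 1) (at t)" by (auto intro!: derivative_eq_intros)
  from DERIV_fun_powr[OF this, of e] t show ?thesis by simp
qed

lemma Bd_powr:
  assumes f: "smth f" and pos: "\<And>t. t > 0 \<Longrightarrow> f t > 0" and c0: "c0 > 0"
    and low: "\<And>t. t > 0 \<Longrightarrow> f t \<ge> c0 * (1 + t) powr kk"
    and B: "Bd k kk f"
  shows "Bd k (kk * r) (\<lambda>t. f t powr r)"
  using B
proof (induction k arbitrary: r)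
  case 0
  then obtain C1 where C1: "\<forall>t>0. \<bar>f t\<bar> \<le> C1 * (1 + t) powr kk" by (auto simp: Bd_0)
  have C10: "C1 \<ge> 0" by (rule bound_C_nonneg[OF C1])
  show ?case unfolding Bd_0
  proof (cases "r \<ge> 0")
    case True
    show "\<exists>C. \<forall>t>0. \<bar>f t powr r\<bar> \<le> C * (1 + t) powr (kk * r)"
    proof (intro exI[of _ "C1 powr r"] allI impI)
      fix t :: real assume t: "t > 0"
      have "f t powr r \<le> (C1 * (1 + t) powr kk) powr r"
        using C1 t pos[OF t] True by (intro powr_mono2) auto
      also have "\<dots> = C1 powr r * (1 + t) powr (kk * r)"
        using C10 t by (simp add: powr_mult powr_powr)
      finally show "\<bar>f t powr r\<bar> \<le> C1 powr r * (1 + t) powr (kk * r)" by simp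
    qed
  next
    case False
    show "\<exists>C. \<forall>t>0. \<bar>f t powr r\<bar> \<le> C * (1 + t) powr (kk * r)"
    proof (intro exI[of _ "c0 powr r"] allI impI)
      fix t :: real assume t: "t > 0"
      have "f t powr r \<le> (c0 * (1 + t) powr kk) powr r"
        using low[OF t] t c0 False by (intro powr_mono2') auto
      also have "\<dots> = c0 powr r * (1 + t) powr (kk * r)"
        using c0 t by (simp add: powr_mult powr_powr)
      finally show "\<bar>f t powr r\<bar> \<le> c0 powr r * (1 + t) powr (kk * r)" by simp
    qed
  qed
next
  case (Suc k)
  have B0: "Bd 0 (kk * r) (\<lambda>t. f t powr r)"
    using Suc.IH[of r] Suc.prems Bd_mono[of "Suc k" kk f k] Bd_mono[of k _ _ 0] by simp
  have fk: "Bd k kk f" using Suc.prems Bd_mono[of "Suc k" kk f k] by simp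
  have fd: "Bd k (kk - 1) (deriv f)" using Suc.prems by (simp add: Bd_Suc)
  have "Bd k (kk * (r - 1) + (kk - 1)) (\<lambda>t. f t powr (r - 1) * deriv f t)"
    using Suc.IH[OF fk, of "r - 1"] fd f pos by (intro Bd_mult smth_powr smth_deriv) auto
  then have "Bd k (kk * (r - 1) + (kk - 1)) (\<lambda>t. r * (f t powr (r - 1) * deriv f t))"
    using f pos by (intro Bd_cmult smth_mult smth_powr smth_deriv) auto
  moreover have "kk * (r - 1) + (kk - 1) = kk * r - 1" by (simp add: algebra_simps)
  ultimately have "Bd k (kk * r - 1) (\<lambda>t. r * (f t powr (r - 1) * deriv f t))" by simp
  then have "Bd k (kk * r - 1) (deriv (\<lambda>t. f t powr r))"
    by (rule Bd_cong[rotated]) (auto simp: deriv_powr_pos[OF f pos] algebra_simps)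
  then show ?case using B0 by (simp add: Bd_Suc)
qed

lemma Bd_lin: "Bd k 1 (\<lambda>t. 1 + t)"
proof (cases k)
  case 0 then show ?thesis by (auto simp: Bd_0 intro!: exI[of _ 1])
next
  case (Suc k')
  have "deriv (\<lambda>t::real. 1 + t) = (\<lambda>t. 1)"
    by (rule ext, rule DERIV_imp_deriv) (auto intro!: derivative_eq_intros)
  then show ?thesis using Suc Bd_const[of k' 1] by (auto simp: Bd_Suc Bd_0 intro!: exI[of _ 1])
qed

lemma Sy_pw: "Sy s (\<lambda>t. (1 + t) powr s)"
  unfolding Sy_def
proof
  fix k
  show "Bd k s (\<lambda>t. (1 + t) powr s)"
    using Bd_powr[OF smth_lin _ _ _ Bd_lin, of 1 k s] by simp
qed

lemma TR:
  "smth f \<Longrightarrow> smth g \<Longrightarrow> Bd n m f \<Longrightarrow> (n > 0 \<longrightarrow> Bd (n - 1) q g) \<Longrightarrow>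
   \<exists>C. \<forall>t>0. \<bar>(deriv ^^ n) (\<lambda>t. f t * g t) t - f t * (deriv ^^ n) g t\<bar> \<le> C * (1 + t) powr (m + q - real n)"
proof (induction n arbitrary: f g m q)
  case 0 then show ?case by (intro exI[of _ 0]) auto
next
  case (Suc n)
  have f: "smth f" and g: "smth g" using Suc.prems by auto
  have fd: "Bd n (m - 1) (deriv f)" using Suc.prems by (simp add: Bd_Suc)
  have fn: "Bd n m f" using Suc.prems Bd_mono[of "Suc n" m f n] by simp
  have gn: "Bd n q g" using Suc.prems by simp
  have "Bd n (m - 1 + q) (\<lambda>t. deriv f t * g t)" using fd gn f g by (intro Bd_mult smth_deriv)
  then obtain C1 where C1: "\<forall>t>0. \<bar>(deriv ^^ n) (\<lambda>t. deriv f t * g t) t\<bar> \<le> C1 * (1 + t) powr (m - 1 + q - real n)"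
    unfolding Bd_def by auto
  have "n > 0 \<longrightarrow> Bd (n - 1) (q - 1) (deriv g)"
  proof
    assume "n > 0"
    then have "Bd (Suc (n - 1)) q g" using gn by simp
    then show "Bd (n - 1) (q - 1) (deriv g)" by (simp add: Bd_Suc)
  qed
  from Suc.IH[OF f smth_deriv[OF g] fn this] obtain C2 where
    C2: "\<forall>t>0. \<bar>(deriv ^^ n) (\<lambda>t. f t * deriv g t) t - f t * (deriv ^^ n) (deriv g) t\<bar> \<le> C2 * (1 + t) powr (m + (q - 1) - real n)"
    by auto
  show ?case
  proof (intro exI[of _ "C1 + C2"] allI impI)
    fix t :: real assume t: "t > 0"
    have e: "(deriv ^^ Suc n) (\<lambda>t. f t * g t) t - f t * (deriv ^^ Suc n) g t =
      (deriv ^^ n) (\<lambda>t. deriv f t * g t) t + ((deriv ^^ n) (\<lambda>t. f t * deriv g t) t - f t * (deriv ^^ n) (deriv g) t)"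
      using fd_mult[OF f g t, of n] by (simp only: funpow_deriv_Suc)
    have x: "m - 1 + q - real n = m + q - real (Suc n)" and y: "m + (q - 1) - real n = m + q - real (Suc n)" by auto
    have c1: "\<bar>(deriv ^^ n) (\<lambda>t. deriv f t * g t) t\<bar> \<le> C1 * (1 + t) powr (m + q - real (Suc n))"
      using C1[rule_format, OF t] unfolding x .
    have c2: "\<bar>(deriv ^^ n) (\<lambda>t. f t * deriv g t) t - f t * (deriv ^^ n) (deriv g) t\<bar> \<le> C2 * (1 + t) powr (m + q - real (Suc n))"
      using C2[rule_format, OF t] unfolding y .
    show "\<bar>(deriv ^^ Suc n) (\<lambda>t. f t * g t) t - f t * (deriv ^^ Suc n) g t\<bar> \<le> (C1 + C2) * (1 + t) powr (m + q - real (Suc n))"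
      unfolding e distrib_right using c1 c2 abs_triangle_ineq by (smt (verit))
  qed
qed

lemma pw_le:
  fixes x T r :: real
  shows "0 \<le> x \<Longrightarrow> x \<le> T \<Longrightarrow> (1 + x) powr r \<le> (1 + T) powr \<bar>r\<bar>"
proof (cases "r \<ge> 0")
  case True
  assume "0 \<le> x" "x \<le> T"
  then show ?thesis by (subst abs_of_nonneg[OF True]) (rule powr_mono2, use True in auto)
next
  case False
  assume x: "0 \<le> x" "x \<le> T"
  have "(1 + x) powr r \<le> 1" using x False
    using powr_mono[of r 0 "1 + x"] by simp
  also have "1 \<le> (1 + T) powr \<bar>r\<bar>" using x by (intro ge_one_powr_ge_zero) auto
  finally show ?thesis .
qed

lemma pw_ge:
  fixes x T s :: real
  shows "0 \<le> x \<Longrightarrow> x \<le> T \<Longrightarrow> 1 \<le> (1 + T) powr \<bar>s\<bar> * (1 + x) powr s"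
proof (cases "s \<ge> 0")
  case True
  assume x: "0 \<le> x" "x \<le> T"
  have a: "1 \<le> (1 + T) powr \<bar>s\<bar>" using x by (intro ge_one_powr_ge_zero) auto
  have b: "1 \<le> (1 + x) powr s" using x True by (intro ge_one_powr_ge_zero) auto
  have "1 * 1 \<le> (1 + T) powr \<bar>s\<bar> * (1 + x) powr s" using a b by (intro mult_mono) auto
  then show ?thesis by simp
next
  case False
  assume x: "0 \<le> x" "x \<le> T"
  have "(1 + T) powr s \<le> (1 + x) powr s" using x False by (intro powr_mono2') auto
  then have "(1 + T) powr \<bar>s\<bar> * (1 + T) powr s \<le> (1 + T) powr \<bar>s\<bar> * (1 + x) powr s"
    by (intro mult_left_mono) auto
  moreover have "(1 + T) powr \<bar>s\<bar> * (1 + T) powr s = 1" using False x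
    by (simp add: powr_add[symmetric])
  ultimately show ?thesis by simp
qed

lemma CMP:
  fixes Y G :: "real \<Rightarrow> real"
  assumes lam: "0 \<le> lam" "lam < 1"
    and dY: "\<And>t. t > 0 \<Longrightarrow> (Y has_real_derivative (- ((1 + t) powr (- lam)) * Y t + G t)) (at t)"
    and bG: "\<And>t. t > 0 \<Longrightarrow> \<bar>G t\<bar> \<le> C * (1 + t) powr r"
  shows "\<exists>C'. \<forall>t>0. \<bar>Y t\<bar> \<le> C' * (1 + t) powr (r + lam)"
proof -
  define s where "s = r + lam"
  define A where "A t = (1 + t) powr (1 - lam) / (1 - lam)" for t
  have dA: "(A has_real_derivative (1 + t) powr (- lam)) (at t)" if "t > -1" for t
  proof -
    have "(A has_real_derivative (1 - lam) * (1 + t) powr (1 - lam - 1) / (1 - lam)) (at t)"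
      unfolding A_def[abs_def] using d_pw[OF that, of "1 - lam"] by (intro DERIV_cdivide) auto
    then show ?thesis using lam by simp
  qed
  have A0: "A t \<ge> 0" for t unfolding A_def using lam by auto
  have Amono: "A x \<le> A y" if "0 \<le> x" "x \<le> y" for x y
    unfolding A_def using lam that by (intro divide_right_mono powr_mono2) auto
  have C0: "C \<ge> 0"
  proof -
    have "\<bar>G 1\<bar> \<le> C * 2 powr r" using bG[of 1] by simp
    then have "0 \<le> C * 2 powr r" by (meson abs_ge_zero order_trans)
    then show ?thesis by (simp add: zero_le_mult_iff)
  qed
  define z where "z t = exp (A t) * Y t" for t
  have dz: "(z has_real_derivative exp (A t) * G t) (at t)" if "t > 0" for t
  proof -
    have "((\<lambda>t. exp (A t)) has_real_derivative exp (A t) * (1 + t) powr (- lam)) (at t)"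
      using dA[of t] that by (auto intro!: derivative_eq_intros)
    from DERIV_mult[OF this dY[OF that]] show ?thesis unfolding z_def[abs_def]
      by (rule DERIV_cong) (simp add: algebra_simps)
  qed
  define T0 where "T0 = (2 * \<bar>s\<bar> + 1) powr (1 / (1 - lam))"
  have T0ge: "T0 \<ge> 1" unfolding T0_def using lam by (intro ge_one_powr_ge_zero) auto
  have key: "\<bar>s\<bar> * (1 + t) powr (lam - 1) \<le> 1 / 2" if "t \<ge> T0" for t
  proof -
    have "T0 powr (1 - lam) = 2 * \<bar>s\<bar> + 1" unfolding T0_def using lam
      by (simp add: powr_powr)
    moreover have "T0 powr (1 - lam) \<le> (1 + t) powr (1 - lam)" using that lam T0ge by (intro powr_mono2) auto
    ultimately have g: "2 * \<bar>s\<bar> + 1 \<le> (1 + t) powr (1 - lam)" by simp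
    have pos: "(1 + t) powr (1 - lam) > 0" using that T0ge by simp
    have e: "(1 + t) powr (lam - 1) = 1 / (1 + t) powr (1 - lam)"
      using powr_minus[of "1 + t" "1 - lam"] by (simp add: divide_inverse)
    have "\<bar>s\<bar> * (1 + t) powr (lam - 1) = \<bar>s\<bar> / (1 + t) powr (1 - lam)" unfolding e by simp
    also have "\<dots> \<le> \<bar>s\<bar> / (2 * \<bar>s\<bar> + 1)" using g pos by (intro divide_left_mono) auto
    also have "\<dots> \<le> 1 / 2" by (simp add: field_simps)
    finally show ?thesis .
  qed
  define M where "M = exp (A T0) * C * (1 + T0) powr \<bar>r\<bar>"
  have bz': "\<bar>exp (A x) * G x\<bar> \<le> M" if "0 < x" "x \<le> T0" for x
  proof -
    have "\<bar>exp (A x) * G x\<bar> = exp (A x) * \<bar>G x\<bar>" by (simp add: abs_mult)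
    also have "\<dots> \<le> exp (A T0) * (C * (1 + T0) powr \<bar>r\<bar>)"
    proof (rule mult_mono)
      show "exp (A x) \<le> exp (A T0)" using Amono[of x T0] that by simp
      have "C * (1 + x) powr r \<le> C * (1 + T0) powr \<bar>r\<bar>" using pw_le[of x T0 r] that C0
        by (intro mult_left_mono) auto
      then show "\<bar>G x\<bar> \<le> C * (1 + T0) powr \<bar>r\<bar>" using bG[of x] that by simp
    qed auto
    finally show ?thesis unfolding M_def by (simp add: mult.assoc)
  qed
  define B where "B = \<bar>z T0\<bar> + M * T0"
  have part1: "\<bar>Y t\<bar> \<le> B" if t: "0 < t" "t \<le> T0" for t
  proof -
    have "sg * z t \<le> \<bar>z T0\<bar> + M * T0" if sg: "sg = 1 \<or> sg = -1" for sg
    proof -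
      have "sg * z t + M * t \<le> sg * z T0 + M * T0"
      proof (rule DERIV_nonneg_imp_nondecreasing[OF t(2)])
        fix x assume x: "t \<le> x" "x \<le> T0"
        have "((\<lambda>x. sg * z x + M * x) has_real_derivative sg * (exp (A x) * G x) + M) (at x)"
          using dz[of x] x t by (auto intro!: derivative_eq_intros)
        moreover have "sg * (exp (A x) * G x) + M \<ge> 0" using bz'[of x] x t sg by auto
        ultimately show "\<exists>y. ((\<lambda>x. sg * z x + M * x) has_real_derivative y) (at x) \<and> 0 \<le> y" by blast
      qed
      moreover have "M * t \<ge> 0" using bz'[of t] t by (meson abs_ge_zero order_trans mult_nonneg_nonneg less_imp_le)
      ultimately show ?thesis using sg by auto
    qed
    from this[of 1] this[of "-1"] have "\<bar>z t\<bar> \<le> B" unfolding B_def by auto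
    moreover have "\<bar>Y t\<bar> \<le> \<bar>z t\<bar>"
    proof -
      have "exp (A t) \<ge> 1" using A0[of t] by simp
      then have "\<bar>Y t\<bar> * 1 \<le> \<bar>Y t\<bar> * exp (A t)" by (intro mult_left_mono) auto
      then show ?thesis unfolding z_def by (simp add: abs_mult mult.commute)
    qed
    ultimately show ?thesis by simp
  qed
  define K where "K = max (2 * C) (\<bar>Y T0\<bar> * (1 + T0) powr (- s))"
  have K0: "K \<ge> 2 * C" unfolding K_def by simp
  have KT0: "\<bar>Y T0\<bar> \<le> K * (1 + T0) powr s"
  proof -
    have "\<bar>Y T0\<bar> = \<bar>Y T0\<bar> * (1 + T0) powr (- s) * (1 + T0) powr s" using T0ge
      by (simp add: mult.assoc powr_add[symmetric])
    also have "\<dots> \<le> K * (1 + T0) powr s" unfolding K_def by (intro mult_right_mono) auto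
    finally show ?thesis .
  qed
  have part2: "\<bar>Y t\<bar> \<le> K * (1 + t) powr s" if t: "T0 \<le> t" for t
  proof -
    have "sg * Y t \<le> K * (1 + t) powr s" if sg: "sg = 1 \<or> sg = -1" for sg
    proof -
      define E where "E x = exp (A x) * (sg * Y x - K * (1 + x) powr s)" for x
      have "E t \<le> E T0"
      proof (rule DERIV_nonpos_imp_nonincreasing[OF t])
        fix x assume x: "T0 \<le> x" "x \<le> t"
        then have xp: "x > 0" using T0ge by auto
        have dd: "((\<lambda>x. sg * Y x - K * (1 + x) powr s) has_real_derivative
                 sg * (- ((1 + x) powr (- lam)) * Y x + G x) - K * (s * (1 + x) powr (s - 1))) (at x)"
          using dY[OF xp] d_pw[of x s] xp by (auto intro!: derivative_eq_intros)
        have de: "((\<lambda>t. exp (A t)) has_real_derivative exp (A x) * (1 + x) powr (- lam)) (at x)"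
          using dA[of x] xp by (auto intro!: derivative_eq_intros)
        have pp: "(1 + x) powr (- lam) * (1 + x) powr s = (1 + x) powr (s - lam)"
          using xp by (simp add: powr_add[symmetric])
        have ring: "exp (A x) * (1 + x) powr (- lam) * (sg * Y x - K * (1 + x) powr s) +
            (sg * (- ((1 + x) powr (- lam)) * Y x + G x) - K * (s * (1 + x) powr (s - 1))) * exp (A x) =
            exp (A x) * (sg * G x - K * ((1 + x) powr (- lam) * (1 + x) powr s) - K * s * (1 + x) powr (s - 1))"
          by (simp add: algebra_simps)
        have dE: "(E has_real_derivative exp (A x) * (sg * G x - K * (1 + x) powr (s - lam) - K * s * (1 + x) powr (s - 1))) (at x)"
          unfolding E_def[abs_def] using DERIV_mult[OF de dd]
          by (rule DERIV_cong) (simp only: ring pp)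
        have p1: "(1 + x) powr (s - lam) = (1 + x) powr r" unfolding s_def by simp
        have p2: "(1 + x) powr (s - 1) = (1 + x) powr r * (1 + x) powr (lam - 1)"
        proof -
          have "s - 1 = r + (lam - 1)" unfolding s_def by simp
          then show ?thesis by (simp only: powr_add)
        qed
        have k: "\<bar>s\<bar> * (1 + x) powr (lam - 1) \<le> 1 / 2" by (rule key[OF x(1)])
        have "- s * (1 + x) powr (lam - 1) \<le> \<bar>s\<bar> * (1 + x) powr (lam - 1)"
          by (intro mult_right_mono) auto
        then have "- (s * (1 + x) powr (lam - 1)) \<le> 1 / 2" using k by simp
        then have "K * (1 + x) powr r * (1 / 2) \<le> K * (1 + x) powr r * (1 + s * (1 + x) powr (lam - 1))"
          using K0 C0 by (intro mult_left_mono) auto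
        moreover have "C * (1 + x) powr r \<le> K * (1 + x) powr r * (1 / 2)"
        proof -
          have "2 * C * (1 + x) powr r \<le> K * (1 + x) powr r" using K0 by (intro mult_right_mono) auto
          then show ?thesis by simp
        qed
        moreover have "sg * G x \<le> C * (1 + x) powr r" using bG[OF xp] sg by auto
        ultimately have "sg * G x - K * (1 + x) powr (s - lam) - K * s * (1 + x) powr (s - 1) \<le> 0"
          unfolding p1 p2 by (simp add: algebra_simps)
        then have "exp (A x) * (sg * G x - K * (1 + x) powr (s - lam) - K * s * (1 + x) powr (s - 1)) \<le> 0"
          by (simp add: mult_nonneg_nonpos)
        with dE show "\<exists>y. (E has_real_derivative y) (at x) \<and> y \<le> 0" by blast
      qed
      moreover have "E T0 \<le> 0" unfolding E_def using KT0 sg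
        by (intro mult_nonneg_nonpos) auto
      ultimately have "E t \<le> 0" by simp
      then have "sg * Y t - K * (1 + t) powr s \<le> 0" unfolding E_def
        by (simp add: mult_le_0_iff)
      then show ?thesis by simp
    qed
    from this[of 1] this[of "-1"] show ?thesis by auto
  qed
  show ?thesis
  proof (intro exI[of _ "max (B * (1 + T0) powr \<bar>s\<bar>) K"] allI impI)
    fix t :: real assume t: "t > 0"
    show "\<bar>Y t\<bar> \<le> max (B * (1 + T0) powr \<bar>s\<bar>) K * (1 + t) powr (r + lam)"
    proof (cases "t \<le> T0")
      case True
      have B0: "B \<ge> 0" using part1[OF t True] by simp
      have "\<bar>Y t\<bar> \<le> B * 1" using part1[OF t True] by simp
      also have "\<dots> \<le> B * ((1 + T0) powr \<bar>s\<bar> * (1 + t) powr s)"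
        using pw_ge[of t T0 s] t True B0 by (intro mult_left_mono) auto
      also have "\<dots> \<le> max (B * (1 + T0) powr \<bar>s\<bar>) K * (1 + t) powr s"
        by (simp add: mult.assoc[symmetric] mult_right_mono)
      finally show ?thesis unfolding s_def .
    next
      case False
      have "\<bar>Y t\<bar> \<le> K * (1 + t) powr s" using part2[of t] False by simp
      also have "\<dots> \<le> max (B * (1 + T0) powr \<bar>s\<bar>) K * (1 + t) powr s"
        by (simp add: mult_right_mono)
      finally show ?thesis unfolding s_def .
    qed
  qed
qed

lemma REL:
  fixes Z F :: "real \<Rightarrow> real"
  assumes lam: "0 \<le> lam" "lam < 1" and Z: "smth Z" and F: "smth F" and BF: "Bd k m F"
    and eq: "\<And>t. t > 0 \<Longrightarrow> deriv Z t = - ((1 + t) powr (- lam)) * Z t + F t"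
  shows "Bd k (m + lam) Z"
  using BF
proof (induction k)
  case 0
  then obtain C where C: "\<forall>t>0. \<bar>F t\<bar> \<le> C * (1 + t) powr m" by (auto simp: Bd_0)
  have "\<exists>C'. \<forall>t>0. \<bar>Z t\<bar> \<le> C' * (1 + t) powr (m + lam)"
  proof (rule CMP[OF lam, of Z F C m])
    fix t :: real assume t: "t > 0"
    show "(Z has_real_derivative - ((1 + t) powr - lam) * Z t + F t) (at t)"
      using smth_diff[OF Z t] eq[OF t] by simp
    show "\<bar>F t\<bar> \<le> C * (1 + t) powr m" using C t by auto
  qed
  then show ?case by (simp add: Bd_0)
next
  case (Suc k)
  have IH: "Bd k (m + lam) Z" using Suc.IH Suc.prems Bd_mono[of "Suc k" m F k] by simp
  define a where "a t = (1 + t) powr (- lam)" for t :: real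
  have sa: "smth a" unfolding a_def[abs_def] by (rule smth_pw)
  have Ba: "Bd (Suc k) (- lam) a" using Sy_pw[of "- lam"] unfolding Sy_def a_def[abs_def] by blast
  obtain C1 where C1: "\<forall>t>0. \<bar>(deriv ^^ Suc k) (\<lambda>t. a t * Z t) t - a t * (deriv ^^ Suc k) Z t\<bar>
      \<le> C1 * (1 + t) powr (- lam + (m + lam) - real (Suc k))"
    using TR[OF sa Z Ba, of "m + lam"] IH by auto
  obtain C2 where C2: "\<forall>t>0. \<bar>(deriv ^^ Suc k) F t\<bar> \<le> C2 * (1 + t) powr (m - real (Suc k))"
    using Suc.prems unfolding Bd_def by blast
  define G where "G t = - ((deriv ^^ Suc k) (\<lambda>t. a t * Z t) t - a t * (deriv ^^ Suc k) Z t) + (deriv ^^ Suc k) F t" for t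
  have "\<exists>C'. \<forall>t>0. \<bar>(deriv ^^ Suc k) Z t\<bar> \<le> C' * (1 + t) powr (m - real (Suc k) + lam)"
  proof (rule CMP[OF lam, of "(deriv ^^ Suc k) Z" G "C1 + C2" "m - real (Suc k)"])
    fix t :: real assume t: "t > 0"
    have d1: "((deriv ^^ Suc k) Z has_real_derivative (deriv ^^ Suc (Suc k)) Z t) (at t)"
      using Z t unfolding smth_def Ck_def by blast
    have "(deriv ^^ Suc (Suc k)) Z t = (deriv ^^ Suc k) (deriv Z) t" by (simp only: funpow_deriv_Suc)
    also have "\<dots> = (deriv ^^ Suc k) (\<lambda>t. (-1) * (a t * Z t) + F t) t"
      by (rule funpow_deriv_cong_pos[OF _ t]) (simp add: eq a_def)
    also have "\<dots> = (-1) * (deriv ^^ Suc k) (\<lambda>t. a t * Z t) t + (deriv ^^ Suc k) F t"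
    proof -
      have sm: "smth (\<lambda>t. a t * Z t)" using sa Z by (rule smth_mult)
      show ?thesis
        using fd_add[OF smth_cmult[OF sm, of "-1"] F t, where j="Suc k"] fd_cmult[OF sm t, where c="-1" and j="Suc k"]
        by (simp only:)
    qed
    also have "\<dots> = - (a t) * (deriv ^^ Suc k) Z t + G t" unfolding G_def by simp
    finally show "((deriv ^^ Suc k) Z has_real_derivative - ((1 + t) powr - lam) * (deriv ^^ Suc k) Z t + G t) (at t)"
      using d1 unfolding a_def by simp
    have e: "- lam + (m + lam) - real (Suc k) = m - real (Suc k)" by simp
    have "\<bar>G t\<bar> \<le> C1 * (1 + t) powr (m - real (Suc k)) + C2 * (1 + t) powr (m - real (Suc k))"
      using C1[rule_format, OF t] C2[rule_format, OF t] unfolding G_def e by linarith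
    then show "\<bar>G t\<bar> \<le> (C1 + C2) * (1 + t) powr (m - real (Suc k))" by (simp add: distrib_right)
  qed
  then have "\<exists>C'. \<forall>t>0. \<bar>(deriv ^^ Suc k) Z t\<bar> \<le> C' * (1 + t) powr (m + lam - real (Suc k))"
    by (simp add: algebra_simps)
  then show ?case by (rule Bd_SucI[OF IH])
qed

lemma mono_cont:
  fixes g g' :: "real \<Rightarrow> real"
  assumes "a \<le> b" "continuous_on {a..b} g"
    "\<And>x. a < x \<Longrightarrow> x < b \<Longrightarrow> (g has_real_derivative g' x) (at x)"
    "\<And>x. a < x \<Longrightarrow> x < b \<Longrightarrow> g' x \<le> 0"
  shows "g b \<le> g a"
proof (cases "a = b")
  case True then show ?thesis by simp
next
  case False
  then have ab: "a < b" using assms(1) by simp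
  from MVT[OF ab assms(2)] obtain l z where z: "a < z" "z < b" "DERIV g z :> l" "g b - g a = (b - a) * l"
    using assms(3) real_differentiable_def by blast
  have "l = g' z" using DERIV_unique[OF z(3) assms(3)[OF z(1,2)]] .
  then have "l \<le> 0" using assms(4)[OF z(1,2)] by simp
  then show ?thesis using z(4) ab by (smt (verit) mult_nonneg_nonpos)
qed

lemma dA_gen:
  assumes "lam < 1" "t > -1"
  shows "((\<lambda>t. (1 + t) powr (1 - lam) / (1 - lam)) has_real_derivative (1 + t) powr (- lam)) (at t)"
proof -
  have "((\<lambda>t. (1 + t) powr (1 - lam) / (1 - lam)) has_real_derivative (1 - lam) * (1 + t) powr (1 - lam - 1) / (1 - lam)) (at t)"
    using d_pw[OF assms(2), of "1 - lam"] by (intro DERIV_cdivide) auto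
  then show ?thesis using assms by simp
qed

locale Setup =
  fixes n :: nat and gam lam :: real and h h' h'' :: "real \<Rightarrow> real"
  assumes n: "n \<in> {2, 3}"
    and gam: "gam > 1"
    and lam: "0 \<le> lam" "lam < 1"
    and dh: "\<And>t. t \<ge> 0 \<Longrightarrow> (h has_real_derivative h' t) (at t within {0..})"
    and dh': "\<And>t. t > 0 \<Longrightarrow> (h' has_real_derivative h'' t) (at t)"
    and pos: "\<And>t. t \<ge> 0 \<Longrightarrow> nu n gam lam t + h t > 0"
    and ode: "\<And>t. t > 0 \<Longrightarrow>
      h'' t + (1 + t) powr (-lam) * h' t
        - kappa n gam lam * (nu n gam lam t + h t) powr (real n - real n * gam - 1)
      = - (kappa n gam lam * (kappa n gam lam - 1) * (1 + t) powr (kappa n gam lam - 2))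
        - (1 + t) powr (-lam) * (kappa n gam lam * (1 + t) powr (kappa n gam lam - 1))"
    and init: "h 0 = 0" "h' 0 = 0"
begin

definition "p = real n * gam - real n + 2"
definition "kk = kappa n gam lam"
definition "th t = nu n gam lam t + h t"
definition "a t = (1 + t) powr (- lam)"
definition "y t = kk * (1 + t) powr (kk - 1) + h' t"

lemma p_gt: "p > 2"
proof -
  have "real n \<ge> 2" using n by auto
  moreover have "real n * gam - real n = real n * (gam - 1)" by (simp add: algebra_simps)
  ultimately have "real n * gam - real n > 0" using gam by simp
  then show ?thesis unfolding p_def by simp
qed

lemma kk_def': "kk = (1 + lam) / p"
  unfolding kk_def kappa_def p_def by simp

lemma kk_pos: "kk > 0" using p_gt lam by (simp add: kk_def')
lemma kk_lt1: "kk < 1" using p_gt lam by (simp add: kk_def' field_simps)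
lemma kkp: "kk * p = 1 + lam" using p_gt by (simp add: kk_def')

lemma th0: "th 0 = 1" unfolding th_def nu_def using init by simp
lemma th_pos: "t \<ge> 0 \<Longrightarrow> th t > 0" unfolding th_def using pos by simp

lemma a_pos: "t > -1 \<Longrightarrow> a t > 0" unfolding a_def by simp

lemma dh_at: "t > 0 \<Longrightarrow> (h has_real_derivative h' t) (at t)"
proof -
  assume t: "t > 0"
  have "t \<in> interior {0::real..}" using t by simp
  then have "at t within {0..} = at t" by (rule at_within_interior)
  then show ?thesis using dh[of t] t by simp
qed

lemma d_nu: "t > -1 \<Longrightarrow> ((\<lambda>t. nu n gam lam t) has_real_derivative kk * (1 + t) powr (kk - 1)) (at t)"
  unfolding nu_def kk_def by (rule d_pw)

lemma d_th: "t > 0 \<Longrightarrow> (th has_real_derivative y t) (at t)"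
  unfolding th_def[abs_def] y_def using d_nu[of t] dh_at[of t]
  by (auto intro!: derivative_eq_intros)

lemma d_y: "t > 0 \<Longrightarrow> (y has_real_derivative kk * th t powr (1 - p) - a t * y t) (at t)"
proof -
  assume t: "t > 0"
  have "(y has_real_derivative kk * ((kk - 1) * (1 + t) powr (kk - 1 - 1)) + h'' t) (at t)"
    unfolding y_def[abs_def] using d_pw[of t "kk - 1"] dh'[OF t] t
    by (auto intro!: derivative_eq_intros)
  moreover have "kk * ((kk - 1) * (1 + t) powr (kk - 1 - 1)) + h'' t = kk * th t powr (1 - p) - a t * y t"
  proof -
    have e1: "real n - real n * gam - 1 = 1 - p" unfolding p_def by simp
    have e2: "kk - 1 - 1 = kk - 2" by simp
    have ring: "\<And>H2 A H1 T Z X::real. H2 + A * H1 - kk * T = - (kk * (kk - 1) * Z) - A * (kk * X) \<Longrightarrow>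
        kk * ((kk - 1) * Z) + H2 = kk * T - A * (kk * X + H1)"
      by (simp add: algebra_simps)
    show ?thesis using ode[OF t] unfolding e1 e2 th_def[symmetric] kk_def[symmetric] a_def y_def
      by (rule ring)
  qed
  ultimately show ?thesis by simp
qed

lemma cont_th: "continuous_on {0..} th"
proof -
  have "continuous (at t within {0..}) th" if "t \<ge> 0" for t
  proof -
    have "continuous (at t within {0..}) h" using dh[OF that] by (rule DERIV_continuous)
    moreover have "continuous (at t within {0..}) (\<lambda>t. nu n gam lam t)"
    proof -
      have "((\<lambda>t. nu n gam lam t) has_real_derivative kk * (1 + t) powr (kk - 1)) (at t)"
        using that by (intro d_nu) auto
      then have "((\<lambda>t. nu n gam lam t) has_real_derivative kk * (1 + t) powr (kk - 1)) (at t within {0..})"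
        by (rule has_field_derivative_at_within)
      then show ?thesis by (rule DERIV_continuous)
    qed
    ultimately show ?thesis unfolding th_def[abs_def] by (rule continuous_add[rotated])
  qed
  then show ?thesis by (simp add: continuous_on_eq_continuous_within)
qed

lemma deriv_th: "t > 0 \<Longrightarrow> deriv th t = y t" using d_th by (rule DERIV_imp_deriv)
lemma deriv_y: "t > 0 \<Longrightarrow> deriv y t = kk * th t powr (1 - p) - a t * y t" using d_y by (rule DERIV_imp_deriv)

lemma smth_a: "smth a" unfolding a_def[abs_def] by (rule smth_pw)

lemma Ck_th_y: "Ck k th \<and> Ck k y"
proof (induction k)
  case 0
  show ?case using d_th d_y by (auto simp: Ck_0 deriv_th deriv_y)
next
  case (Suc k)
  have thS: "Ck (Suc k) th"
    unfolding Ck_Suc using d_th deriv_th Ck_cong[of y "deriv th" k] Suc by auto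
  have "Ck k (\<lambda>t. kk * th t powr (1 - p) + (-1) * (a t * y t))"
    using Suc smth_a th_pos unfolding smth_def
    by (intro Ck_add Ck_cmult Ck_mult Ck_powr) auto
  then have "Ck k (deriv y)" by (rule Ck_cong[rotated]) (simp add: deriv_y)
  then have "Ck (Suc k) y" unfolding Ck_Suc using d_y deriv_y by auto
  with thS show ?case by simp
qed

lemma smth_th: "smth th" unfolding smth_def using Ck_th_y by blast
lemma smth_y: "smth y" unfolding smth_def using Ck_th_y by blast

end

context Setup
begin

definition "AA t = (1 + t) powr (1 - lam) / (1 - lam)"

lemma dAA: "t > -1 \<Longrightarrow> (AA has_real_derivative a t) (at t)"
  unfolding AA_def[abs_def] a_def using dA_gen[OF lam(2)] by simp

lemma AA_mono: "0 \<le> x1 \<Longrightarrow> x1 \<le> x2 \<Longrightarrow> AA x1 \<le> AA x2"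
  unfolding AA_def using lam by (intro divide_right_mono powr_mono2) auto

lemma cont_h: "continuous_on {0..} h"
proof -
  have "continuous (at t within {0..}) h" if "t \<ge> 0" for t using dh[OF that] by (rule DERIV_continuous)
  then show ?thesis by (simp add: continuous_on_eq_continuous_within)
qed

lemma exists_xi: "\<exists>xi. 0 < xi \<and> xi < 1 \<and> y xi > 0"
proof -
  have "(h has_real_derivative 0) (at 0 within {0..})" using dh[of 0] init by simp
  then have "((\<lambda>s. (h s - h 0) / (s - 0)) \<longlongrightarrow> 0) (at 0 within {0..})"
    by (simp add: has_field_derivative_iff)
  from tendstoD[OF this, of "kk / 4"] kk_pos
  have "eventually (\<lambda>s. dist ((h s - h 0) / (s - 0)) 0 < kk / 4) (at 0 within {0..})" by simp
  then obtain d where d: "d > 0" and dd: "\<And>s. s \<in> {0..} \<Longrightarrow> s \<noteq> 0 \<Longrightarrow> dist s 0 < d \<Longrightarrow> \<bar>(h s - h 0) / s\<bar> < kk / 4"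
    unfolding eventually_at by auto
  define s0 where "s0 = min (d / 2) (1 / 2)"
  have s0: "0 < s0" "s0 < 1" "s0 < d" unfolding s0_def using d by auto
  have q: "\<bar>(h s0 - h 0) / s0\<bar> < kk / 4" using dd[of s0] s0 by auto
  have ch: "continuous_on {0..s0} h" using cont_h by (rule continuous_on_subset) auto
  from MVT[OF s0(1) ch] obtain l xi where xi: "0 < xi" "xi < s0" "DERIV h xi :> l" "h s0 - h 0 = (s0 - 0) * l"
    using dh_at real_differentiable_def by (metis)
  have l: "l = h' xi" using DERIV_unique[OF xi(3) dh_at[OF xi(1)]] .
  have hq: "\<bar>h' xi\<bar> < kk / 4" using q xi(4) s0 l by simp
  have "(1 + xi) powr (kk - 1) \<ge> 2 powr (kk - 1)"
    using kk_lt1 xi s0 by (intro powr_mono2') auto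
  moreover have "2 powr (kk - 1) \<ge> 2 powr (-1::real)" using kk_pos by (intro powr_mono) auto
  ultimately have "(1 + xi) powr (kk - 1) \<ge> 1 / 2" by (simp add: powr_minus_divide)
  then have "kk * (1 + xi) powr (kk - 1) \<ge> kk / 2" using kk_pos
    by (metis mult.commute mult_left_mono less_imp_le times_divide_eq_right mult_1 times_divide_eq_left)
  then have "y xi > 0" unfolding y_def using hq kk_pos by linarith
  then show ?thesis using xi s0 by auto
qed

lemma y_pos: "t \<ge> 1 \<Longrightarrow> y t > 0"
proof -
  assume t: "t \<ge> 1"
  obtain xi where xi: "0 < xi" "xi < 1" "y xi > 0" using exists_xi by blast
  define z where "z s = exp (AA s) * y s" for s
  have "z xi \<le> z t"
  proof (rule DERIV_nonneg_imp_nondecreasing[of xi t z])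
    show "xi \<le> t" using xi t by simp
    fix x assume x: "xi \<le> x" "x \<le> t"
    then have xp: "x > 0" using xi by simp
    have de: "((\<lambda>s. exp (AA s)) has_real_derivative exp (AA x) * a x) (at x)"
      using dAA[of x] xp by (auto intro!: derivative_eq_intros)
    have "(z has_real_derivative exp (AA x) * a x * y x + (kk * th x powr (1 - p) - a x * y x) * exp (AA x)) (at x)"
      unfolding z_def[abs_def] by (rule DERIV_mult[OF de d_y[OF xp]])
    moreover have "exp (AA x) * a x * y x + (kk * th x powr (1 - p) - a x * y x) * exp (AA x) = exp (AA x) * (kk * th x powr (1 - p))"
      by (simp add: algebra_simps)
    moreover have "exp (AA x) * (kk * th x powr (1 - p)) \<ge> 0" using kk_pos by simp
    ultimately show "\<exists>d. (z has_real_derivative d) (at x) \<and> 0 \<le> d" by auto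
  qed
  moreover have "z xi > 0" unfolding z_def using xi by simp
  ultimately have "z t > 0" by simp
  then show "y t > 0" unfolding z_def by (simp add: zero_less_mult_iff)
qed

end

context Setup
begin

definition "PP t = p * a t * th t powr (p - 1) * y t"

lemma d_thp: "t > 0 \<Longrightarrow> ((\<lambda>t. th t powr r) has_real_derivative r * th t powr (r - 1) * y t) (at t)"
  using DERIV_fun_powr[OF d_th th_pos, of t r] by simp

lemma PP_deriv_ineq:
  assumes t: "t \<ge> 1"
  shows "\<exists>D. (PP has_real_derivative D) (at t) \<and> D \<ge> (1 + lam) * a t * (1 - PP t)"
proof -
  have tp: "t > 0" using t by simp
  have D1: "((\<lambda>t. p * a t) has_real_derivative p * (- lam * (1 + t) powr (- lam - 1))) (at t)"
    unfolding a_def using d_pw[of t "- lam"] tp by (intro DERIV_cmult) auto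
  have D2: "((\<lambda>t. p * a t * th t powr (p - 1)) has_real_derivative
      p * (- lam * (1 + t) powr (- lam - 1)) * th t powr (p - 1) + (p - 1) * th t powr (p - 1 - 1) * y t * (p * a t)) (at t)"
    by (rule DERIV_mult[OF D1 d_thp[OF tp]])
  have D3: "(PP has_real_derivative
      (p * (- lam * (1 + t) powr (- lam - 1)) * th t powr (p - 1) + (p - 1) * th t powr (p - 1 - 1) * y t * (p * a t)) * y t
      + (kk * th t powr (1 - p) - a t * y t) * (p * a t * th t powr (p - 1))) (at t)"
    unfolding PP_def[abs_def] by (rule DERIV_mult[OF D2 d_y[OF tp]])
  have ypos: "y t > 0" by (rule y_pos[OF t])
  have thpos: "th t > 0" using th_pos tp by simp
  have apos: "a t > 0" using a_pos tp by simp
  have PPpos: "PP t > 0" unfolding PP_def using p_gt ypos thpos apos by simp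
  have f2: "(1 + t) powr (- lam - 1) = a t / (1 + t)"
    unfolding a_def using tp by (simp add: powr_diff)
  have e1: "p * (- lam * (1 + t) powr (- lam - 1)) * th t powr (p - 1) * y t = - (lam / (1 + t)) * PP t"
    unfolding f2 PP_def using tp by (simp add: field_simps)
  have f1: "th t powr (1 - p) * th t powr (p - 1) = 1" using thpos by (simp add: powr_add[symmetric])
  have e2a: "(kk * th t powr (1 - p) - a t * y t) * (p * a t * th t powr (p - 1))
      = (kk * p) * a t * (th t powr (1 - p) * th t powr (p - 1)) - a t * PP t"
    unfolding PP_def by (simp add: algebra_simps)
  have e2: "(kk * th t powr (1 - p) - a t * y t) * (p * a t * th t powr (p - 1)) = (1 + lam) * a t - a t * PP t"
    unfolding e2a f1 kkp by simp
  have e3: "(p - 1) * th t powr (p - 1 - 1) * y t * (p * a t) * y t \<ge> 0"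
    using p_gt ypos apos by simp
  have le1: "1 / (1 + t) \<le> a t"
  proof -
    have "(1 + t) powr (-1) \<le> (1 + t) powr (- lam)" using lam tp by (intro powr_mono) auto
    then show ?thesis unfolding a_def using tp by (simp add: powr_minus_divide)
  qed
  have le2: "lam * PP t * (1 / (1 + t)) \<le> lam * PP t * a t"
    using le1 lam PPpos by (intro mult_left_mono) auto
  define D where "D = (p * (- lam * (1 + t) powr (- lam - 1)) * th t powr (p - 1) + (p - 1) * th t powr (p - 1 - 1) * y t * (p * a t)) * y t
      + (kk * th t powr (1 - p) - a t * y t) * (p * a t * th t powr (p - 1))"
  have "D = p * (- lam * (1 + t) powr (- lam - 1)) * th t powr (p - 1) * y t + (p - 1) * th t powr (p - 1 - 1) * y t * (p * a t) * y t
      + (kk * th t powr (1 - p) - a t * y t) * (p * a t * th t powr (p - 1))"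
    unfolding D_def by (simp only: distrib_right)
  also have "\<dots> = - (lam / (1 + t)) * PP t + (p - 1) * th t powr (p - 1 - 1) * y t * (p * a t) * y t + ((1 + lam) * a t - a t * PP t)"
    unfolding e1 e2 by simp
  finally have De: "D = - (lam / (1 + t)) * PP t + (p - 1) * th t powr (p - 1 - 1) * y t * (p * a t) * y t + ((1 + lam) * a t - a t * PP t)" .
  have "(1 + lam) * a t * (1 - PP t) = (1 + lam) * a t - a t * PP t - lam * PP t * a t" by (simp add: algebra_simps)
  moreover have "- (lam / (1 + t)) * PP t = - (lam * PP t * (1 / (1 + t)))" by simp
  ultimately have "D \<ge> (1 + lam) * a t * (1 - PP t)" unfolding De using e3 le2 by linarith
  then show ?thesis using D3 unfolding D_def by blast
qed

lemma PP_lb: "\<exists>cP>0. \<forall>t\<ge>1. PP t \<ge> cP"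
proof -
  have P1: "PP 1 > 0" unfolding PP_def using p_gt y_pos[of 1] th_pos[of 1] a_pos[of 1] by simp
  have main: "PP t \<ge> min 1 (PP 1)" if t: "t \<ge> 1" for t
  proof -
    define W where "W s = exp ((1 + lam) * AA s) * (1 - PP s)" for s
    have "W t \<le> W 1"
    proof (rule DERIV_nonpos_imp_nonincreasing[of 1 t W])
      show "1 \<le> t" by (rule t)
      fix x assume x: "1 \<le> x" "x \<le> t"
      obtain D where D: "(PP has_real_derivative D) (at x)" "D \<ge> (1 + lam) * a x * (1 - PP x)"
        using PP_deriv_ineq[OF x(1)] by blast
      have de: "((\<lambda>s. exp ((1 + lam) * AA s)) has_real_derivative exp ((1 + lam) * AA x) * ((1 + lam) * a x)) (at x)"
        using dAA[of x] x by (auto intro!: derivative_eq_intros)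
      have d1: "((\<lambda>s. 1 - PP s) has_real_derivative - D) (at x)" using D(1) by (auto intro!: derivative_eq_intros)
      have "(W has_real_derivative exp ((1 + lam) * AA x) * ((1 + lam) * a x) * (1 - PP x) + (- D) * exp ((1 + lam) * AA x)) (at x)"
        unfolding W_def[abs_def] by (rule DERIV_mult[OF de d1])
      moreover have "exp ((1 + lam) * AA x) * ((1 + lam) * a x) * (1 - PP x) + (- D) * exp ((1 + lam) * AA x)
          = exp ((1 + lam) * AA x) * ((1 + lam) * a x * (1 - PP x) - D)" by (simp add: algebra_simps)
      moreover have "exp ((1 + lam) * AA x) * ((1 + lam) * a x * (1 - PP x) - D) \<le> 0"
        using D(2) by (intro mult_nonneg_nonpos) auto
      ultimately show "\<exists>y. (W has_real_derivative y) (at x) \<and> y \<le> 0" by auto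
    qed
    show ?thesis
    proof (cases "1 - PP t \<le> 0")
      case True then show ?thesis by simp
    next
      case False
      have "exp ((1 + lam) * AA 1) \<le> exp ((1 + lam) * AA t)"
        using AA_mono[of 1 t] t lam by (simp add: mult_left_mono)
      then have "exp ((1 + lam) * AA 1) * (1 - PP t) \<le> exp ((1 + lam) * AA t) * (1 - PP t)"
        using False by (intro mult_right_mono) auto
      also have "\<dots> \<le> exp ((1 + lam) * AA 1) * (1 - PP 1)" using \<open>W t \<le> W 1\<close> unfolding W_def .
      finally have "1 - PP t \<le> 1 - PP 1" by simp
      then show ?thesis by simp
    qed
  qed
  show ?thesis using P1 main by (intro exI[of _ "min 1 (PP 1)"]) auto
qed

end

context Setup
begin

lemma th_lb: "\<exists>c0>0. \<forall>t\<ge>0. th t \<ge> c0 * (1 + t) powr kk"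
proof -
  obtain cP where cP: "cP > 0" "\<And>t. t \<ge> 1 \<Longrightarrow> PP t \<ge> cP" using PP_lb by blast
  define c1 where "c1 = min (cP / (1 + lam)) (th 1 powr p / 2 powr (1 + lam))"
  have c1pos: "c1 > 0" unfolding c1_def using cP lam th_pos[of 1] by simp
  have big: "th t powr p \<ge> c1 * (1 + t) powr (1 + lam)" if t: "t \<ge> 1" for t
  proof -
    define V where "V s = th s powr p - c1 * (1 + s) powr (1 + lam)" for s
    have "V 1 \<le> V t"
    proof (rule DERIV_nonneg_imp_nondecreasing[of 1 t V])
      show "1 \<le> t" by (rule t)
      fix x assume x: "1 \<le> x" "x \<le> t"
      then have xp: "x > 0" by simp
      have dV: "(V has_real_derivative p * th x powr (p - 1) * y x - c1 * ((1 + lam) * (1 + x) powr (1 + lam - 1))) (at x)"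
        unfolding V_def[abs_def] using xp by (intro DERIV_diff d_thp DERIV_cmult d_pw) auto
      have ax: "a x * (1 + x) powr lam = 1" unfolding a_def using xp by (simp add: powr_add[symmetric])
      have "p * th x powr (p - 1) * y x = PP x * (1 + x) powr lam"
        unfolding PP_def using ax by (simp add: algebra_simps)
      also have "\<dots> \<ge> cP * (1 + x) powr lam" using cP(2)[OF x(1)] by (intro mult_right_mono) auto
      finally have u1: "p * th x powr (p - 1) * y x \<ge> cP * (1 + x) powr lam" .
      have "c1 \<le> cP / (1 + lam)" unfolding c1_def by simp
      then have "c1 * (1 + lam) \<le> cP / (1 + lam) * (1 + lam)" using lam by (intro mult_right_mono) auto
      then have "c1 * (1 + lam) \<le> cP" using lam by simp
      then have "c1 * ((1 + lam) * (1 + x) powr (1 + lam - 1)) \<le> cP * (1 + x) powr lam"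
        by (simp add: mult.assoc[symmetric] mult_right_mono)
      with u1 dV show "\<exists>y. (V has_real_derivative y) (at x) \<and> 0 \<le> y" by force
    qed
    moreover have "V 1 \<ge> 0"
    proof -
      have "c1 * 2 powr (1 + lam) \<le> th 1 powr p / 2 powr (1 + lam) * 2 powr (1 + lam)"
        unfolding c1_def by (intro mult_right_mono) auto
      then show ?thesis unfolding V_def by simp
    qed
    ultimately show ?thesis unfolding V_def by simp
  qed
  have big2: "th t \<ge> c1 powr (1 / p) * (1 + t) powr kk" if t: "t \<ge> 1" for t
  proof -
    have "(c1 * (1 + t) powr (1 + lam)) powr (1 / p) \<le> (th t powr p) powr (1 / p)"
      using big[OF t] p_gt c1pos t by (intro powr_mono2) auto
    moreover have "(th t powr p) powr (1 / p) = th t" using p_gt th_pos[of t] t by (simp add: powr_powr)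
    moreover have "(c1 * (1 + t) powr (1 + lam)) powr (1 / p) = c1 powr (1 / p) * (1 + t) powr kk"
      using c1pos t by (simp add: powr_mult powr_powr kk_def')
    ultimately show ?thesis by simp
  qed
  obtain x0 where x0: "x0 \<in> {0..1}" "\<And>x. x \<in> {0..1} \<Longrightarrow> th x0 \<le> th x"
    using continuous_attains_inf[of "{0..1::real}" th] continuous_on_subset[OF cont_th, of "{0..1}"] by auto
  define m0 where "m0 = th x0"
  have m0: "m0 > 0" unfolding m0_def using th_pos x0 by auto
  define c0 where "c0 = min (m0 * 2 powr (- kk)) (c1 powr (1 / p))"
  have c0: "c0 > 0" unfolding c0_def using m0 c1pos by simp
  have "th t \<ge> c0 * (1 + t) powr kk" if t: "t \<ge> 0" for t
  proof (cases "t \<le> 1")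
    case True
    have "(1 + t) powr kk \<le> 2 powr kk" using True t kk_pos by (intro powr_mono2) auto
    then have "c0 * (1 + t) powr kk \<le> m0 * 2 powr (- kk) * 2 powr kk"
      unfolding c0_def using m0 by (intro mult_mono) auto
    also have "\<dots> = m0" by (simp add: powr_add[symmetric])
    also have "\<dots> \<le> th t" unfolding m0_def using x0 t True by auto
    finally show ?thesis .
  next
    case False
    have "c0 * (1 + t) powr kk \<le> c1 powr (1 / p) * (1 + t) powr kk"
      unfolding c0_def by (intro mult_right_mono) auto
    also have "\<dots> \<le> th t" using big2 False by simp
    finally show ?thesis .
  qed
  then show ?thesis using c0 by blast
qed

end

context Setup
begin

lemma c0_ex: "\<exists>c0>0. \<forall>t>0. th t \<ge> c0 * (1 + t) powr kk"
  using th_lb by (meson less_imp_le)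

lemma th_pos': "t > 0 \<Longrightarrow> th t > 0" using th_pos by simp

lemma Bd0_F: "Bd 0 (kk * (1 - p)) (\<lambda>t. th t powr (1 - p))"
proof -
  obtain c0 where c0: "c0 > 0" "\<And>t. t > 0 \<Longrightarrow> th t \<ge> c0 * (1 + t) powr kk" using c0_ex by blast
  show ?thesis unfolding Bd_0
  proof (intro exI[of _ "c0 powr (1 - p)"] allI impI)
    fix t :: real assume t: "t > 0"
    have "th t powr (1 - p) \<le> (c0 * (1 + t) powr kk) powr (1 - p)"
      using c0(2)[OF t] t c0(1) p_gt by (intro powr_mono2') auto
    also have "\<dots> = c0 powr (1 - p) * (1 + t) powr (kk * (1 - p))"
      using c0 t by (simp add: powr_mult powr_powr)
    finally show "\<bar>th t powr (1 - p)\<bar> \<le> c0 powr (1 - p) * (1 + t) powr (kk * (1 - p))" by simp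
  qed
qed

lemma eq_th: "t > 0 \<Longrightarrow> deriv (deriv th) t = - (a t) * deriv th t + kk * th t powr (1 - p)"
proof -
  assume t: "t > 0"
  have "deriv (deriv th) t = deriv y t" by (rule deriv_cong_pos[OF deriv_th t])
  then show ?thesis using deriv_y[OF t] deriv_th[OF t] by simp
qed

lemma exp_rel: "kk * (1 - p) + lam = kk - 1" using kkp by (simp add: algebra_simps)

lemma Bd_dth_of:
  assumes "Bd k (kk * (1 - p)) (\<lambda>t. th t powr (1 - p))"
  shows "Bd k (kk - 1) (deriv th)"
proof -
  have F: "Bd k (kk * (1 - p)) (\<lambda>t. kk * th t powr (1 - p))"
    using assms smth_th th_pos' by (intro Bd_cmult smth_powr) auto
  have "Bd k (kk * (1 - p) + lam) (deriv th)"
  proof (rule REL[OF lam smth_deriv[OF smth_th] _ F])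
    show "smth (\<lambda>t. kk * th t powr (1 - p))" using smth_th th_pos' by (intro smth_cmult smth_powr) auto
    fix t :: real assume "t > 0"
    then show "deriv (deriv th) t = - ((1 + t) powr - lam) * deriv th t + kk * th t powr (1 - p)"
      using eq_th unfolding a_def by simp
  qed
  then show ?thesis unfolding exp_rel .
qed

lemma Bd0_th: "Bd 0 kk th"
proof -
  obtain C where C: "\<forall>t>0. \<bar>deriv th t\<bar> \<le> C * (1 + t) powr (kk - 1)"
    using Bd_dth_of[OF Bd0_F] by (auto simp: Bd_0)
  have C0: "C \<ge> 0" by (rule bound_C_nonneg[OF C])
  show ?thesis unfolding Bd_0
  proof (intro exI[of _ "1 + C / kk"] allI impI)
    fix t :: real assume t: "t > 0"
    define g where "g s = th s - C / kk * (1 + s) powr kk" for s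
    have "g t \<le> g 0"
    proof (rule mono_cont[of 0 t g "\<lambda>s. deriv th s - C / kk * (kk * (1 + s) powr (kk - 1))"])
      show "0 \<le> t" using t by simp
      have "continuous_on {0..t} th" using cont_th by (rule continuous_on_subset) auto
      moreover have "continuous_on {0..t} (\<lambda>s. (1 + s) powr kk)"
        by (intro continuous_intros) auto
      ultimately show "continuous_on {0..t} g" unfolding g_def[abs_def] by (intro continuous_intros) auto
      fix x assume x: "0 < x" "x < t"
      show "(g has_real_derivative deriv th x - C / kk * (kk * (1 + x) powr (kk - 1))) (at x)"
        unfolding g_def[abs_def] using x smth_diff[OF smth_th, of x]
        by (intro DERIV_diff DERIV_cmult d_pw) auto
      show "deriv th x - C / kk * (kk * (1 + x) powr (kk - 1)) \<le> 0"
        using C x kk_pos by auto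
    qed
    then have "th t \<le> 1 - C / kk + C / kk * (1 + t) powr kk" unfolding g_def using th0 by simp
    also have "\<dots> \<le> (1 + C / kk) * (1 + t) powr kk"
    proof -
      have "1 \<le> (1 + t) powr kk" using t kk_pos by (intro ge_one_powr_ge_zero) auto
      moreover have "C / kk \<ge> 0" using C0 kk_pos by simp
      ultimately show ?thesis by (simp add: algebra_simps)
    qed
    finally show "\<bar>th t\<bar> \<le> (1 + C / kk) * (1 + t) powr kk" using th_pos'[OF t] by simp
  qed
qed

lemma Sy_th: "Sy kk th"
  unfolding Sy_def
proof
  fix k show "Bd k kk th"
  proof (induction k)
    case 0 show ?case by (rule Bd0_th)
  next
    case (Suc k)
    obtain c0 where c0: "c0 > 0" "\<And>t. t > 0 \<Longrightarrow> th t \<ge> c0 * (1 + t) powr kk" using c0_ex by blast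
    have "Bd k (kk * (1 - p)) (\<lambda>t. th t powr (1 - p))"
      by (rule Bd_powr[OF smth_th th_pos' c0 Suc.IH])
    then have "Bd k (kk - 1) (deriv th)" by (rule Bd_dth_of)
    then show ?case using Bd0_th by (simp add: Bd_Suc)
  qed
qed

end

context Setup
begin

lemma Sy_thr: "Sy (kk * r) (\<lambda>t. th t powr r)"
  unfolding Sy_def
proof
  fix k
  obtain c0 where c0: "c0 > 0" "\<And>t. t > 0 \<Longrightarrow> th t \<ge> c0 * (1 + t) powr kk" using c0_ex by blast
  show "Bd k (kk * r) (\<lambda>t. th t powr r)"
    using Bd_powr[OF smth_th th_pos' c0] Sy_th unfolding Sy_def by blast
qed

definition "ys t = kk * (th t powr (1 - p) * (1 + t) powr lam)"
definition "ee t = deriv th t - ys t"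

lemma smth_ys: "smth ys"
  unfolding ys_def[abs_def] using smth_th th_pos' by (intro smth_cmult smth_mult smth_powr smth_pw) auto

lemma smth_ee: "smth ee"
  unfolding ee_def[abs_def] by (intro smth_diff' smth_deriv smth_th smth_ys)

lemma Sy_ys: "Sy (kk - 1) ys"
  unfolding Sy_def
proof
  fix k
  have "Bd k (kk * (1 - p) + lam) (\<lambda>t. th t powr (1 - p) * (1 + t) powr lam)"
    using Sy_thr[of "1 - p"] Sy_pw[of lam] smth_th th_pos' unfolding Sy_def
    by (intro Bd_mult smth_powr smth_pw) auto
  then have "Bd k (kk * (1 - p) + lam) ys"
    unfolding ys_def[abs_def] using smth_th th_pos' by (intro Bd_cmult smth_mult smth_powr smth_pw) auto
  then show "Bd k (kk - 1) ys" unfolding exp_rel .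
qed

lemma a_pw: "t > -1 \<Longrightarrow> a t * (1 + t) powr lam = 1"
  unfolding a_def by (simp add: powr_add[symmetric])

lemma eq_ee: "t > 0 \<Longrightarrow> deriv ee t = - ((1 + t) powr (- lam)) * ee t + (-1) * deriv ys t"
proof -
  assume t: "t > 0"
  have "deriv ee t = deriv (deriv th) t - deriv ys t"
    unfolding ee_def[abs_def]
    by (rule DERIV_imp_deriv, intro DERIV_diff smth_diff smth_deriv smth_th smth_ys t)
  also have "\<dots> = - (a t) * deriv th t + kk * th t powr (1 - p) - deriv ys t" using eq_th[OF t] by simp
  also have "kk * th t powr (1 - p) = a t * ys t"
    unfolding ys_def using a_pw[of t] t by (simp add: algebra_simps)
  finally show ?thesis unfolding ee_def a_def by (simp add: algebra_simps)
qed

lemma Sy_ee: "Sy (kk - 1 - 1 + lam) ee"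
  unfolding Sy_def
proof
  fix k
  have Bys: "Bd (Suc k) (kk - 1) ys" using Sy_ys unfolding Sy_def by blast
  have "Bd k (kk - 1 - 1) (\<lambda>t. (-1) * deriv ys t)"
    using Bys smth_ys by (intro Bd_cmult smth_deriv) (auto simp: Bd_Suc)
  then show "Bd k (kk - 1 - 1 + lam) ee"
    by (rule REL[OF lam smth_ee smth_cmult[OF smth_deriv[OF smth_ys]]]) (rule eq_ee)
qed

definition "RR t = p * (a t * (th t powr (p - 1) * ee t))"

lemma smth_RR: "smth RR"
  unfolding RR_def[abs_def] using smth_th th_pos' smth_a smth_ee
  by (intro smth_cmult smth_mult smth_powr) auto

lemma Sy_RR: "Sy (lam - 1) RR"
  unfolding Sy_def
proof
  fix k
  have B1: "Bd k (kk * (p - 1)) (\<lambda>t. th t powr (p - 1))" using Sy_thr[of "p - 1"] unfolding Sy_def by blast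
  have B2: "Bd k (kk - 1 - 1 + lam) ee" using Sy_ee unfolding Sy_def by blast
  have B3: "Bd k (- lam) a" using Sy_pw[of "- lam"] unfolding Sy_def a_def[abs_def] by blast
  have s1: "smth (\<lambda>t. th t powr (p - 1))" using smth_th th_pos' by (rule smth_powr)
  have B12: "Bd k (kk * (p - 1) + (kk - 1 - 1 + lam)) (\<lambda>t. th t powr (p - 1) * ee t)"
    by (rule Bd_mult[OF s1 smth_ee B1 B2])
  have s12: "smth (\<lambda>t. th t powr (p - 1) * ee t)" by (rule smth_mult[OF s1 smth_ee])
  have B123: "Bd k (- lam + (kk * (p - 1) + (kk - 1 - 1 + lam))) (\<lambda>t. a t * (th t powr (p - 1) * ee t))"
    by (rule Bd_mult[OF smth_a s12 B3 B12])
  have B: "Bd k (- lam + (kk * (p - 1) + (kk - 1 - 1 + lam))) RR"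
    unfolding RR_def[abs_def] by (rule Bd_cmult[OF smth_mult[OF smth_a s12] B123])
  have e: "- lam + (kk * (p - 1) + (kk - 1 - 1 + lam)) = lam - 1" using kkp by (simp add: algebra_simps)
  show "Bd k (lam - 1) RR" using B unfolding e .
qed

lemma RR_eq: "t > 0 \<Longrightarrow> RR t = p * a t * th t powr (p - 1) * deriv th t - (1 + lam)"
proof -
  assume t: "t > 0"
  have f1: "th t powr (p - 1) * th t powr (1 - p) = 1" using th_pos'[OF t] by (simp add: powr_add[symmetric])
  have "p * a t * th t powr (p - 1) * ys t = (kk * p) * (a t * (1 + t) powr lam) * (th t powr (p - 1) * th t powr (1 - p))"
    unfolding ys_def by (simp add: algebra_simps)
  also have "\<dots> = 1 + lam" unfolding f1 kkp using a_pw[of t] t by simp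
  finally have "p * a t * th t powr (p - 1) * ys t = 1 + lam" .
  then show ?thesis unfolding RR_def ee_def by (simp add: algebra_simps)
qed

definition "II t = th t powr p - (1 + t) powr (1 + lam)"

lemma smth_II: "smth II"
  unfolding II_def[abs_def] using smth_th th_pos' by (intro smth_diff' smth_powr smth_pw) auto

lemma d_II: "t > 0 \<Longrightarrow> (II has_real_derivative (1 + t) powr lam * RR t) (at t)"
proof -
  assume t: "t > 0"
  have "(II has_real_derivative p * th t powr (p - 1) * y t - (1 + lam) * (1 + t) powr (1 + lam - 1)) (at t)"
    unfolding II_def[abs_def] using t by (intro DERIV_diff d_thp d_pw) auto
  moreover have "p * th t powr (p - 1) * y t - (1 + lam) * (1 + t) powr (1 + lam - 1) = (1 + t) powr lam * RR t"
  proof -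
    have "(1 + t) powr lam * RR t = (a t * (1 + t) powr lam) * (p * th t powr (p - 1) * deriv th t) - (1 + lam) * (1 + t) powr lam"
      unfolding RR_eq[OF t] by (simp add: algebra_simps)
    then show ?thesis using a_pw[of t] t deriv_th[OF t] by simp
  qed
  ultimately show ?thesis by simp
qed

lemma Sy_dII: "Sy (2 * lam - 1) (deriv II)"
proof -
  have "Sy (lam + (lam - 1)) (\<lambda>t. (1 + t) powr lam * RR t)"
    using Sy_pw[of lam] Sy_RR smth_RR unfolding Sy_def by (intro allI Bd_mult smth_pw) auto
  then have "Sy (2 * lam - 1) (\<lambda>t. (1 + t) powr lam * RR t)" by (simp add: algebra_simps)
  then show ?thesis by (rule Sy_cong[rotated]) (simp add: DERIV_imp_deriv[OF d_II])
qed

lemma II0: "II 0 = 0" unfolding II_def using th0 by simp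

lemma cont_II: "continuous_on {0..} II"
proof -
  have nz: "\<forall>x\<in>{0..}. th x > 0" using th_pos by simp
  have "continuous_on {0..} (\<lambda>t. th t powr p)"
    using nz cont_th by (intro continuous_intros) (auto, metis th_pos less_irrefl)
  moreover have "continuous_on {0..} (\<lambda>t::real. (1 + t) powr (1 + lam))"
    by (intro continuous_intros) auto
  ultimately show ?thesis unfolding II_def[abs_def] by (rule continuous_on_diff)
qed

lemma dII_bound: "\<exists>C\<ge>0. \<forall>t>0. \<bar>deriv II t\<bar> \<le> C * (1 + t) powr (2 * lam - 1)"
proof -
  have "Bd 0 (2 * lam - 1) (deriv II)" using Sy_dII unfolding Sy_def by blast
  then obtain C where C: "\<forall>t>0. \<bar>deriv II t\<bar> \<le> C * (1 + t) powr (2 * lam - 1)"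
    by (auto simp: Bd_0)
  then show ?thesis using bound_C_nonneg[OF C] by blast
qed

lemma II_ln: "lam = 0 \<Longrightarrow> \<exists>C. \<forall>t\<ge>0. \<bar>II t\<bar> \<le> C * ln (1 + t)"
proof -
  assume l0: "lam = 0"
  obtain C where C0: "C \<ge> 0" and C: "\<forall>t>0. \<bar>deriv II t\<bar> \<le> C * (1 + t) powr (2 * lam - 1)"
    using dII_bound by blast
  have "sg * II t \<le> C * ln (1 + t)" if t: "t \<ge> 0" and sg: "sg = 1 \<or> sg = -1" for t sg
  proof -
    define g where "g s = sg * II s - C * ln (1 + s)" for s
    have "g t \<le> g 0"
    proof (rule mono_cont[of 0 t g "\<lambda>s. sg * deriv II s - C * (1 / (1 + s))"])
      show "0 \<le> t" by (rule t)
      have "continuous_on {0..t} II" using cont_II by (rule continuous_on_subset) auto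
      moreover have "continuous_on {0..t} (\<lambda>s::real. ln (1 + s))" by (intro continuous_intros) auto
      ultimately show "continuous_on {0..t} g" unfolding g_def[abs_def] by (intro continuous_intros) auto
      fix x assume x: "0 < x" "x < t"
      show "(g has_real_derivative sg * deriv II x - C * (1 / (1 + x))) (at x)"
        unfolding g_def[abs_def] using x smth_diff[OF smth_II, of x]
        by (auto intro!: derivative_eq_intros)
      have "(1 + x) powr (2 * lam - 1) = 1 / (1 + x)" using l0 x by (simp add: powr_minus_divide)
      then show "sg * deriv II x - C * (1 / (1 + x)) \<le> 0" using C x sg by auto
    qed
    then show ?thesis unfolding g_def using II0 by simp
  qed
  from this[of _ 1] this[of _ "-1"] show ?thesis by (intro exI[of _ C]) (auto simp: abs_le_iff)
qed

lemma II_pw: "lam > 0 \<Longrightarrow> \<exists>C. \<forall>t\<ge>0. \<bar>II t\<bar> \<le> C * (1 + t) powr (2 * lam)"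
proof -
  assume l0: "lam > 0"
  obtain C where C0: "C \<ge> 0" and C: "\<forall>t>0. \<bar>deriv II t\<bar> \<le> C * (1 + t) powr (2 * lam - 1)"
    using dII_bound by blast
  have "sg * II t \<le> C / (2 * lam) * (1 + t) powr (2 * lam)" if t: "t \<ge> 0" and sg: "sg = 1 \<or> sg = -1" for t sg
  proof -
    define g where "g s = sg * II s - C / (2 * lam) * (1 + s) powr (2 * lam)" for s
    have "g t \<le> g 0"
    proof (rule mono_cont[of 0 t g "\<lambda>s. sg * deriv II s - C / (2 * lam) * (2 * lam * (1 + s) powr (2 * lam - 1))"])
      show "0 \<le> t" by (rule t)
      have "continuous_on {0..t} II" using cont_II by (rule continuous_on_subset) auto
      moreover have "continuous_on {0..t} (\<lambda>s::real. (1 + s) powr (2 * lam))" by (intro continuous_intros) auto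
      ultimately show "continuous_on {0..t} g" unfolding g_def[abs_def] by (intro continuous_intros) auto
      fix x assume x: "0 < x" "x < t"
      show "(g has_real_derivative sg * deriv II x - C / (2 * lam) * (2 * lam * (1 + x) powr (2 * lam - 1))) (at x)"
        unfolding g_def[abs_def] using x smth_diff[OF smth_II, of x]
        by (intro DERIV_diff DERIV_cmult d_pw) auto
      show "sg * deriv II x - C / (2 * lam) * (2 * lam * (1 + x) powr (2 * lam - 1)) \<le> 0"
        using C x sg l0 by auto
    qed
    moreover have "g 0 \<le> 0" unfolding g_def using II0 C0 l0 by simp
    ultimately show ?thesis unfolding g_def by simp
  qed
  from this[of _ 1] this[of _ "-1"] show ?thesis by (intro exI[of _ "C / (2 * lam)"]) (auto simp: abs_le_iff)
qed

end

theorem mainTheorem9: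
  fixes n :: nat and gam lam :: real and h h' h'' :: "real \<Rightarrow> real"
  assumes n: "n \<in> {2, 3}"
    and gam: "gam > 1"
    and lam: "0 \<le> lam" "lam < 1"
    and dh: "\<And>t. t \<ge> 0 \<Longrightarrow> (h has_real_derivative h' t) (at t within {0..})"
    and dh': "\<And>t. t > 0 \<Longrightarrow> (h' has_real_derivative h'' t) (at t)"
    and pos: "\<And>t. t \<ge> 0 \<Longrightarrow> nu n gam lam t + h t > 0"
    and ode: "\<And>t. t > 0 \<Longrightarrow>
      h'' t + (1 + t) powr (-lam) * h' t
        - kappa n gam lam * (nu n gam lam t + h t) powr (real n - real n * gam - 1)
      = - (kappa n gam lam * (kappa n gam lam - 1) * (1 + t) powr (kappa n gam lam - 2))
        - (1 + t) powr (-lam) * (kappa n gam lam * (1 + t) powr (kappa n gam lam - 1))"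
    and init: "h 0 = 0" "h' 0 = 0"
  defines "Q \<equiv> \<lambda>t. (1 + t) powr (-lam) * (nu n gam lam t + h t) powr (real n * gam - real n + 2) - (1 + t)"
  shows "(lam = 0 \<longrightarrow> (\<exists>C. \<forall>t\<ge>0. \<bar>Q t\<bar> \<le> C * ln (1 + t)))
       \<and> (0 < lam \<longrightarrow> (\<exists>C. \<forall>t\<ge>0. \<bar>Q t\<bar> \<le> C * (1 + t) powr lam))
       \<and> (\<forall>k::nat. k \<ge> 1 \<longrightarrow>
            (\<exists>C. \<forall>t>0. \<bar>(deriv ^^ k) Q t\<bar> \<le> C * (1 + t) powr (lam - real k)))"
proof -
  interpret S: Setup n gam lam h h' h''
    by (rule Setup.intro[OF n gam lam dh dh' pos ode init])
  have Qeq: "Q t = S.a t * S.II t" if t: "t > -1" for t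
  proof -
    have F: "(1 + t) powr (- lam) * (1 + t) powr (1 + lam) = 1 + t" using t by (simp add: powr_add[symmetric])
    show ?thesis unfolding Q_def S.a_def S.II_def S.th_def S.p_def by (simp only: right_diff_distrib F)
  qed
  have P1: "\<exists>C. \<forall>t\<ge>0. \<bar>Q t\<bar> \<le> C * ln (1 + t)" if l0: "lam = 0"
  proof -
    obtain C where C: "\<forall>t\<ge>0. \<bar>S.II t\<bar> \<le> C * ln (1 + t)" using S.II_ln[OF l0] by blast
    have "\<bar>Q t\<bar> \<le> C * ln (1 + t)" if t: "t \<ge> 0" for t
    proof -
      have "S.a t = 1" unfolding S.a_def using l0 t by simp
      then show ?thesis using Qeq[of t] t C by simp
    qed
    then show ?thesis by blast
  qed
  have P2: "\<exists>C. \<forall>t\<ge>0. \<bar>Q t\<bar> \<le> C * (1 + t) powr lam" if l0: "lam > 0"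
  proof -
    obtain C where C: "\<forall>t\<ge>0. \<bar>S.II t\<bar> \<le> C * (1 + t) powr (2 * lam)" using S.II_pw[OF l0] by blast
    have "\<bar>Q t\<bar> \<le> C * (1 + t) powr lam" if t: "t \<ge> 0" for t
    proof -
      have ap: "S.a t > 0" using S.a_pos t by simp
      have "\<bar>Q t\<bar> = S.a t * \<bar>S.II t\<bar>" using Qeq[of t] t ap by (simp add: abs_mult)
      also have "\<dots> \<le> S.a t * (C * (1 + t) powr (2 * lam))" using C t ap by (intro mult_left_mono) auto
      also have "\<dots> = C * ((1 + t) powr (- lam) * (1 + t) powr (2 * lam))" unfolding S.a_def by simp
      also have "(1 + t) powr (- lam) * (1 + t) powr (2 * lam) = (1 + t) powr lam"
        using t by (simp add: powr_add[symmetric])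
      finally show ?thesis .
    qed
    then show ?thesis by blast
  qed
  have SdQ: "Sy (lam - 1) (deriv Q)"
  proof (cases "lam = 0")
    case True
    have "deriv S.II t = deriv Q t" if t: "t > 0" for t
    proof (rule deriv_cong_pos[OF _ t])
      fix s :: real assume s: "s > 0"
      have "S.a s = 1" unfolding S.a_def using True s by simp
      then show "S.II s = Q s" using Qeq[of s] s by simp
    qed
    have "Sy (2 * lam - 1) (deriv S.II)" by (rule S.Sy_dII)
    then have "Sy (lam - 1) (deriv S.II)" using True by simp
    then show ?thesis by (rule Sy_cong[rotated]) (rule \<open>\<And>t. t > 0 \<Longrightarrow> deriv S.II t = deriv Q t\<close>)
  next
    case False
    then have l0: "lam > 0" using lam by simp
    obtain C where C: "\<forall>t\<ge>0. \<bar>S.II t\<bar> \<le> C * (1 + t) powr (2 * lam)" using S.II_pw[OF l0] by blast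
    have B0: "Bd 0 (2 * lam) S.II" unfolding Bd_0 using C by (intro exI[of _ C]) auto
    have SII: "Sy (2 * lam) S.II" unfolding Sy_def
    proof
      fix k show "Bd k (2 * lam) S.II"
      proof (cases k)
        case 0 then show ?thesis using B0 by simp
      next
        case (Suc j)
        have "Bd j (2 * lam - 1) (deriv S.II)" using S.Sy_dII unfolding Sy_def by blast
        then show ?thesis using B0 Suc by (simp add: Bd_Suc)
      qed
    qed
    have Ba: "Sy (- lam) S.a" using Sy_pw[of "- lam"] unfolding S.a_def[abs_def] .
    have "Sy (- lam + 2 * lam) (\<lambda>t. S.a t * S.II t)"
      unfolding Sy_def
    proof
      fix k
      show "Bd k (- lam + 2 * lam) (\<lambda>t. S.a t * S.II t)"
        using Ba SII unfolding Sy_def by (intro Bd_mult[OF S.smth_a S.smth_II]) blast+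
    qed
    then have "Sy lam (\<lambda>t. S.a t * S.II t)" by simp
    then have SQ: "Sy lam Q" by (rule Sy_cong[rotated]) (rule Qeq[symmetric], simp)
    show ?thesis unfolding Sy_def
    proof
      fix k
      have "Bd (Suc k) lam Q" using SQ unfolding Sy_def by blast
      then show "Bd k (lam - 1) (deriv Q)" by (simp add: Bd_Suc)
    qed
  qed
  have P3: "\<exists>C. \<forall>t>0. \<bar>(deriv ^^ k) Q t\<bar> \<le> C * (1 + t) powr (lam - real k)" if k: "k \<ge> 1" for k
  proof -
    obtain j where j: "k = Suc j" using k by (cases k) auto
    have "Bd j (lam - 1) (deriv Q)" using SdQ unfolding Sy_def by blast
    then obtain C where C: "\<forall>t>0. \<bar>(deriv ^^ j) (deriv Q) t\<bar> \<le> C * (1 + t) powr (lam - 1 - real j)"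
      unfolding Bd_def by blast
    have e: "lam - 1 - real j = lam - real k" using j by simp
    show ?thesis using C unfolding e j funpow_deriv_Suc by blast
  qed
  show ?thesis using P1 P2 P3 by blast
qed

end
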